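(* Let $\alpha\in(0,1)$ and let the walk start at $X_0=[\alpha N]$. Write $a=\alpha\wedge(1-\alpha)$ and $b=\alpha\vee(1-\alpha)$. (i) For the symmetric walk, $R_N/N$ converges in distribution as $N\to\infty$ to the absolutely continuous probability measure $G_{0,\alpha}$ on $[a,1]$. This measure is characterized by the fact that for every $\beta\ge0$, $$\lim_{N\to\infty}P_{[\alpha N]}(R_N/N\ge\beta)=\begin{cases}1,&0\le\beta\le a,\\ \dfrac{a}{\beta},& a<\beta<b,\\ \dfrac{1-\beta}{\beta},& b\le\beta\le1,\\ 0,&\beta>1.\end{cases}$$ Equivalently, $G_{0,\alpha}$ has density $g_\alpha(\beta)=a/\beta^2$ for $a<\beta<b$, $g_\alpha(\beta)=1/\beta^2$ for $b\le\beta\le1$, and $g_\alpha(\beta)=0$ otherwise. (ii) For the weakly asymmetric walk with parameter $c>0$, $R_N/N$ converges in distribution to the absolutely continuous probability measure $G_{c,\alpha}$ on $[a,1]$. This measure is characterized by the fact that for every $\beta\ge0$, $$\lim_{N\to\infty}P_{[\alpha N]}(R_N/N\ge\beta)=\begin{cases}1,&0\le\beta\le a,\\ \dfrac{1-e^{-4c\alpha}}{1-e^{-4c\beta}},&\alpha\le\beta\le1-\alpha,\\ \dfrac{1-e^{4c(1-\alpha)}}{1-e^{4c\beta}},&1-\alpha\le\beta\le\alpha,\\ \dfrac{e^{-4c\alpha}\big(e^{4c(1-\beta)}-1\big)}{1-e^{-4c\beta}},& b\le\beta\le1,\\ 0,&\beta>1.\end{cases}$$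
   Context: Fix $N\ge2$ and let $\mathcal T_N=\{0,1,\dots,N\}$. Let $(X_n)_{n\ge0}$ be a nearest-neighbour random walk on $\mathcal T_N$. At each step it moves from its current position $x$ to $x+1$ with probability $p_N$ and to $x-1$ with probability $q_N=1-p_N$, independently of the past. The walk is stopped the first time it is at $0$ or $N$. $P_x$ denotes the law of the walk started at $X_0=x$. The walk is called: - symmetric if $p_N=q_N=1/2$; - weakly asymmetric (with parameter $c>0$ fixed) if $q_N=1/2-c/N$ and $p_N=1/2+c/N$, for $N$ large enough that these lie in $(0,1)$; - asymmetric if $p_N=p$ and $q_N=q$ are fixed with $p+q=1$ and $q<p$. For $a\in\mathcal T_N$ let $T_a=\inf\{n\ge1:X_n=a\}$, and let $\tau_N=T_0\wedge T_N$ (the exit time). Let $G(y)=\sum_{k=0}^{\tau_N}\mathbf 1\{X_k=y\}$ be the number of visits to $y$ up to and including the exit time. The range is $R_N=\#\{y\in\mathcal T_N:G(y)\ge1\}$. Throughout, $[\cdot]$ denotes the integer part. *)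

theory Defs
  imports "HOL-Probability.Probability"
begin

(* Path space: i.i.d. steps, True = step +1 (prob p), False = step -1 (prob 1-p). *)
definition path_space :: "real \<Rightarrow> bool stream measure" where
  "path_space p = stream_space (measure_pmf (bernoulli_pmf p))"

definition walk_pos :: "nat \<Rightarrow> bool stream \<Rightarrow> nat \<Rightarrow> int" where
  "walk_pos x \<omega> n = int x + (\<Sum>k<n. if snth \<omega> k then 1 else -1)"

definition exit_time :: "nat \<Rightarrow> nat \<Rightarrow> bool stream \<Rightarrow> nat" where
  "exit_time N x \<omega> = (LEAST n. n \<ge> 1 \<and> (walk_pos x \<omega> n = 0 \<or> walk_pos x \<omega> n = int N))"

(* R_N = #{y in {0..N}. G(y) >= 1}, G(y) = visits to y at times 0..tau_N. *)
definition range_walk :: "nat \<Rightarrow> nat \<Rightarrow> bool stream \<Rightarrow> nat" where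
  "range_walk N x \<omega> = card ({0..int N} \<inter> {walk_pos x \<omega> k | k. k \<le> exit_time N x \<omega>})"

definition range_law :: "real \<Rightarrow> nat \<Rightarrow> nat \<Rightarrow> real measure" where
  "range_law p N x = distr (path_space p) borel (\<lambda>\<omega>. real (range_walk N x \<omega>) / real N)"

definition range_tail :: "real \<Rightarrow> nat \<Rightarrow> nat \<Rightarrow> real \<Rightarrow> real" where
  "range_tail p N x \<beta> = measure (path_space p)
      {\<omega> \<in> space (path_space p). real (range_walk N x \<omega>) / real N \<ge> \<beta>}"

definition start_pt :: "real \<Rightarrow> nat \<Rightarrow> nat" where
  "start_pt \<alpha> N = nat \<lfloor>\<alpha> * real N\<rfloor>"

definition tail_sym :: "real \<Rightarrow> real \<Rightarrow> real" where
  "tail_sym \<alpha> \<beta> = (let a = min \<alpha> (1 - \<alpha>); b = max \<alpha> (1 - \<alpha>) in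
     if \<beta> \<le> a then 1
     else if \<beta> < b then a / \<beta>
     else if \<beta> \<le> 1 then (1 - \<beta>) / \<beta>
     else 0)"

definition dens_sym :: "real \<Rightarrow> real \<Rightarrow> real" where
  "dens_sym \<alpha> \<beta> = (let a = min \<alpha> (1 - \<alpha>); b = max \<alpha> (1 - \<alpha>) in
     if a < \<beta> \<and> \<beta> < b then a / \<beta>\<^sup>2
     else if b \<le> \<beta> \<and> \<beta> \<le> 1 then 1 / \<beta>\<^sup>2
     else 0)"

definition tail_weak :: "real \<Rightarrow> real \<Rightarrow> real \<Rightarrow> real" where
  "tail_weak c \<alpha> \<beta> = (let a = min \<alpha> (1 - \<alpha>); b = max \<alpha> (1 - \<alpha>) in
     if \<beta> \<le> a then 1
     else if \<alpha> \<le> \<beta> \<and> \<beta> \<le> 1 - \<alpha> then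
       (1 - exp (-4*c*\<alpha>)) / (1 - exp (-4*c*\<beta>))
     else if 1 - \<alpha> \<le> \<beta> \<and> \<beta> \<le> \<alpha> then
       (1 - exp (4*c*(1 - \<alpha>))) / (1 - exp (4*c*\<beta>))
     else if b \<le> \<beta> \<and> \<beta> \<le> 1 then
       exp (-4*c*\<alpha>) * (exp (4*c*(1 - \<beta>)) - 1) / (1 - exp (-4*c*\<beta>))
     else 0)"

end

theory Submission
  imports Defs "HOL-Real_Asymp.Real_Asymp"
begin

definition stp :: "bool \<Rightarrow> int" where "stp b = (if b then 1 else -1)"
definition W :: "int \<Rightarrow> bool stream \<Rightarrow> nat \<Rightarrow> int" where
  "W z \<omega> n = z + (\<Sum>k<n. stp (\<omega> !! k))"

lemma W_0[simp]: "W z \<omega> 0 = z" by (simp add: W_def)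
lemma W_Suc: "W z \<omega> (Suc n) = W z \<omega> n + stp (\<omega> !! n)" by (simp add: W_def)
lemma W_Suc_Cons[simp]: "W z (b ## \<omega>) (Suc n) = W (z + stp b) \<omega> n"
  unfolding W_def sum.lessThan_Suc_shift by simp
lemma walk_pos_W: "walk_pos x \<omega> n = W (int x) \<omega> n"
  unfolding walk_pos_def W_def stp_def by simp
lemma W_step: "\<bar>W z \<omega> (Suc n) - W z \<omega> n\<bar> = 1"
  by (simp add: W_Suc stp_def)

lemma W_stake: "k \<le> n \<Longrightarrow> W z \<omega> k = z + (\<Sum>i<k. stp (stake n \<omega> ! i))"
  unfolding W_def by (intro arg_cong[where f="(+) z"] sum.cong) auto

lemma meas_stake: "stake n \<in> stream_space (measure_pmf (q::bool pmf)) \<rightarrow>\<^sub>M count_space UNIV"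
  by (subst measurable_cong_sets[OF sets_stream_space_cong[OF sets_measure_pmf_count_space] refl])
     measurable

lemma pred_stake[measurable]: "Measurable.pred (stream_space (measure_pmf (q::bool pmf))) (\<lambda>\<omega>. P (stake n \<omega>))"
  using meas_stake by (rule measurable_compose) simp

lemma sum_stake: "k \<le> n \<Longrightarrow> (\<Sum>i<k. stp (stake n \<omega> ! i)) = (\<Sum>i<k. stp (\<omega> !! i))"
  by (intro sum.cong) auto

definition Ev :: "nat \<Rightarrow> int \<Rightarrow> (int \<Rightarrow> bool) \<Rightarrow> int \<Rightarrow> bool stream \<Rightarrow> bool" where
  "Ev N t Q z \<omega> = (\<exists>n. W z \<omega> n = t \<and> (\<forall>k<n. 0 < W z \<omega> k \<and> W z \<omega> k < int N) \<and> (\<exists>k\<le>n. Q (W z \<omega> k)))"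

lemma Ev_meas[measurable]: "Measurable.pred (stream_space (measure_pmf (q::bool pmf))) (Ev N t Q z)"
proof -
  define F where "F n l = ((z + (\<Sum>i<n. stp (l ! i))) = t \<and>
     (\<forall>k<n. 0 < z + (\<Sum>i<k. stp (l ! i)) \<and> z + (\<Sum>i<k. stp (l ! i)) < int N) \<and>
     (\<exists>k\<le>n. Q (z + (\<Sum>i<k. stp (l ! i)))))" for n l
  have "Ev N t Q z \<omega> = (\<exists>n. F n (stake n \<omega>))" for \<omega>
    unfolding Ev_def F_def
    by (intro ex_cong1) (simp add: W_def sum_stake cong: conj_cong)
  hence eq: "Ev N t Q z = (\<lambda>\<omega>. \<exists>n. F n (stake n \<omega>))" by (simp add: fun_eq_iff)
  show ?thesis unfolding eq by measurable
qed

lemma Ev_Cons: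
  assumes "0 < z" "z < int N" "\<not> Q z" "z \<noteq> t"
  shows "Ev N t Q z (b ## \<omega>) = Ev N t Q (z + stp b) \<omega>"
proof
  assume "Ev N t Q z (b ## \<omega>)"
  then obtain n where n: "W z (b ## \<omega>) n = t" "\<forall>k<n. 0 < W z (b ## \<omega>) k \<and> W z (b ## \<omega>) k < int N"
    "\<exists>k\<le>n. Q (W z (b ## \<omega>) k)" unfolding Ev_def by blast
  then obtain m where m: "n = Suc m" using assms by (cases n) auto
  from n(3) obtain k where k: "k \<le> n" "Q (W z (b ## \<omega>) k)" by blast
  then obtain j where j: "k = Suc j" using assms by (cases k) auto
  have "W (z + stp b) \<omega> m = t" using n(1) m by simp
  moreover have "\<forall>k<m. 0 < W (z + stp b) \<omega> k \<and> W (z + stp b) \<omega> k < int N"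
      using n(2) m by (metis Suc_mono W_Suc_Cons)
  moreover have "\<exists>k\<le>m. Q (W (z + stp b) \<omega> k)" using k j m by (intro exI[of _ j]) auto
  ultimately show "Ev N t Q (z + stp b) \<omega>" unfolding Ev_def by blast
next
  assume "Ev N t Q (z + stp b) \<omega>"
  then obtain m where m: "W (z + stp b) \<omega> m = t" "\<forall>k<m. 0 < W (z + stp b) \<omega> k \<and> W (z + stp b) \<omega> k < int N"
    "\<exists>k\<le>m. Q (W (z + stp b) \<omega> k)" unfolding Ev_def by blast
  from m(3) obtain j where j: "j \<le> m" "Q (W (z + stp b) \<omega> j)" by blast
  show "Ev N t Q z (b ## \<omega>)" unfolding Ev_def
  proof (rule exI[of _ "Suc m"], intro conjI)
    show "W z (b ## \<omega>) (Suc m) = t" using m by simp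
    show "\<forall>k<Suc m. 0 < W z (b ## \<omega>) k \<and> W z (b ## \<omega>) k < int N"
    proof (intro allI impI)
      fix k assume "k < Suc m" thus "0 < W z (b ## \<omega>) k \<and> W z (b ## \<omega>) k < int N"
        using m(2) assms by (cases k) auto
    qed
    show "\<exists>k\<le>Suc m. Q (W z (b ## \<omega>) k)" using j by (intro exI[of _ "Suc j"]) auto
  qed
qed

lemma Ev_Q_holds:
  assumes "Q z" shows "Ev N t Q z \<omega> = Ev N t (\<lambda>_. True) z \<omega>"
  unfolding Ev_def using assms by (auto intro!: ex_cong1 exI[of _ 0])

lemma Ev_at_t: "Q t \<Longrightarrow> Ev N t Q t \<omega>"
  unfolding Ev_def by (intro exI[of _ 0]) auto

lemma Ev_at_other: "(z \<le> 0 \<or> z \<ge> int N) \<Longrightarrow> z \<noteq> t \<Longrightarrow> \<not> Ev N t Q z \<omega>"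
  unfolding Ev_def by (auto elim!: allE[of _ 0])

lemma Ev_True_end: "Ev N t (\<lambda>_. True) z \<omega> = Ev N t (\<lambda>w. w = t) z \<omega>"
  unfolding Ev_def by (intro ex_cong1) auto

lemma Ev_bdry_false: "(z \<le> 0 \<or> z \<ge> int N) \<Longrightarrow> \<not> (z = t \<and> Q t) \<Longrightarrow> \<not> Ev N t Q z \<omega>"
  unfolding Ev_def by (auto elim!: allE[of _ 0] simp: le_Suc_eq)

definition pr :: "real \<Rightarrow> nat \<Rightarrow> int \<Rightarrow> (int \<Rightarrow> bool) \<Rightarrow> int \<Rightarrow> real" where
  "pr p N t Q z = measure (path_space p) {\<omega> \<in> space (path_space p). Ev N t Q z \<omega>}"

lemma prob_space_path: "prob_space (path_space p)"
  unfolding path_space_def by (rule prob_space.prob_space_stream_space) (rule prob_space_measure_pmf)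

lemma pr_rec:
  assumes p: "0 \<le> p" "p \<le> 1" and z: "0 < z" "z < int N" "\<not> Q z" "z \<noteq> t"
  shows "pr p N t Q z = p * pr p N t Q (z+1) + (1-p) * pr p N t Q (z-1)"
proof -
  interpret B: prob_space "measure_pmf (bernoulli_pmf p)" by (rule prob_space_measure_pmf)
  have "ennreal (pr p N t Q z) = (\<integral>\<^sup>+b. ennreal (pr p N t Q (z + stp b)) \<partial>measure_pmf (bernoulli_pmf p))"
    unfolding pr_def path_space_def
    by (subst prob_space.prob_stream_space[OF prob_space_measure_pmf]) (auto simp: Ev_Cons[of z N Q t, OF z] intro!: nn_integral_cong)
  also have "\<dots> = ennreal (pr p N t Q (z + 1) * p + pr p N t Q (z - 1) * (1 - p))"
    using p by (simp add: stp_def pr_def ennreal_mult' ennreal_plus[symmetric])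
  finally show ?thesis by (subst (asm) ennreal_inj) (auto simp: pr_def intro!: add_nonneg_nonneg mult_nonneg_nonneg p)
qed

lemma pr_one: "(\<And>\<omega>. Ev N t Q z \<omega>) \<Longrightarrow> pr p N t Q z = 1"
  unfolding pr_def using prob_space.prob_space[OF prob_space_path] by simp

lemma pr_zero: "(\<And>\<omega>. \<not> Ev N t Q z \<omega>) \<Longrightarrow> pr p N t Q z = 0"
  unfolding pr_def by simp

lemma harm_zero:
  fixes h :: "int \<Rightarrow> real"
  assumes p: "0 < p" "p < 1"
    and rec: "\<And>z. lo < z \<Longrightarrow> z < hi \<Longrightarrow> h z = p * h (z+1) + (1-p) * h (z-1)"
    and h0: "h lo = 0" and h1: "h hi = 0" and z: "lo \<le> z" "z \<le> hi"
  shows "h z = 0"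
proof -
  define \<rho> where "\<rho> = (1-p)/p"
  have \<rho>: "\<rho> > 0" using p by (simp add: \<rho>_def)
  define d where "d k = h (lo + int k + 1) - h (lo + int k)" for k :: nat
  have dk: "lo + int k + 1 \<le> hi \<Longrightarrow> d k = \<rho>^k * d 0" for k
  proof (induction k)
    case (Suc k)
    have r: "h (lo + int k + 1) = p * h (lo + int k + 1 + 1) + (1-p) * h (lo + int k + 1 - 1)"
      using Suc.prems by (intro rec) auto
    have "d (Suc k) = \<rho> * d k" unfolding d_def \<rho>_def using p r
      by (simp add: field_simps add.assoc)
    thus ?case using Suc by simp
  qed simp
  have hk: "lo + int k \<le> hi \<Longrightarrow> h (lo + int k) = d 0 * (\<Sum>i<k. \<rho>^i)" for k
  proof (induction k)
    case 0 thus ?case using h0 by simp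
  next
    case (Suc k)
    have "h (lo + int (Suc k)) = h (lo + int k) + d k" unfolding d_def by (simp add: ac_simps)
    thus ?case using Suc dk[of k] by (simp add: algebra_simps)
  qed
  show ?thesis
  proof (cases "lo = hi")
    case True thus ?thesis using z h0 by simp
  next
    case False
    define L where "L = nat (hi - lo)"
    have L: "L \<ge> 1" "lo + int L = hi" using False z by (auto simp: L_def)
    have "(\<Sum>i<L. \<rho>^i) \<ge> \<rho>^0" using L \<rho> by (intro member_le_sum) auto
    hence spos: "(\<Sum>i<L. \<rho>^i) > 0" by simp
    have "d 0 * (\<Sum>i<L. \<rho>^i) = 0" using hk[of L] L h1 by simp
    hence "d 0 = 0" using spos by simp
    thus ?thesis using hk[of "nat (z - lo)"] z by simp
  qed
qed

lemma harm_uniq: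
  fixes f g :: "int \<Rightarrow> real"
  assumes p: "0 < p" "p < 1"
    and rf: "\<And>z. lo < z \<Longrightarrow> z < hi \<Longrightarrow> f z = p * f (z+1) + (1-p) * f (z-1)"
    and rg: "\<And>z. lo < z \<Longrightarrow> z < hi \<Longrightarrow> g z = p * g (z+1) + (1-p) * g (z-1)"
    and "f lo = g lo" "f hi = g hi" "lo \<le> z" "z \<le> hi"
  shows "f z = g z"
proof -
  have "(\<lambda>z. f z - g z) z = 0"
  proof (rule harm_zero[OF p, of lo hi])
    fix z assume a: "lo < z" "z < hi"
    have e1: "f z = p * f (z+1) + (1-p) * f (z-1)" by (rule rf[OF a])
    have e2: "g z = p * g (z+1) + (1-p) * g (z-1)" by (rule rg[OF a])
    show "f z - g z = p * (f (z+1) - g (z+1)) + (1-p) * (f (z-1) - g (z-1))"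
      unfolding e1 e2 by (simp add: algebra_simps)
  qed (use assms in auto)
  thus ?thesis by simp
qed

definition phi :: "real \<Rightarrow> int \<Rightarrow> real" where
  "phi p z = (if p = 1/2 then real_of_int z else 1 - ((1-p)/p) ^ nat z)"

lemma phi_0[simp]: "phi p 0 = 0" by (simp add: phi_def)

lemma phi_harm:
  assumes "0 < p" "p < 1" "z \<ge> 1"
  shows "A + B * phi p z = p * (A + B * phi p (z+1)) + (1-p) * (A + B * phi p (z-1))"
proof (cases "p = 1/2")
  case True thus ?thesis by (simp add: phi_def algebra_simps)
next
  case False
  define r where "r = (1-p)/p"
  define k where "k = nat (z - 1)"
  have k: "z = int k + 1" using assms(3) by (simp add: k_def)
  have n1: "nat (z+1) = k + 2" "nat z = k + 1" "nat (z - 1) = k" using k by auto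
  have "p * r * r + (1-p) = r" using assms unfolding r_def by (simp add: field_simps)
  hence "r^k * (p * r * r + (1-p)) = r^k * r" by simp
  hence key: "p * r^(k+2) + (1-p) * r^k = r^(k+1)" by (simp add: algebra_simps power2_eq_square)
  have "p * (A + B*(1 - r^(k+2))) + (1-p)*(A + B*(1 - r^k)) = A + B - B*(p*r^(k+2) + (1-p)*r^k)"
    by (simp add: algebra_simps)
  also have "\<dots> = A + B * (1 - r^(k+1))" by (simp only: key) (simp add: algebra_simps)
  finally show ?thesis using False unfolding phi_def r_def[symmetric] n1 by simp
qed

lemma phi_strict_mono:
  assumes "1/2 \<le> p" "p < 1" "0 \<le> a" "a < b"
  shows "phi p a < phi p b"
proof (cases "p = 1/2")
  case True thus ?thesis using assms by (simp add: phi_def)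
next
  case False
  define r where "r = (1-p)/p"
  have r: "0 < r" "r < 1" using assms False by (auto simp: r_def field_simps)
  have "r ^ nat b < r ^ nat a" using r assms by (intro power_strict_decreasing) auto
  thus ?thesis using False unfolding phi_def r_def[symmetric] by simp
qed

lemma pr_cong: "(\<And>\<omega>. Ev N t Q z \<omega> = Ev N t' Q' z' \<omega>) \<Longrightarrow> pr p N t Q z = pr p N t' Q' z'"
  unfolding pr_def by simp

lemma phi_pos: "1/2 \<le> p \<Longrightarrow> p < 1 \<Longrightarrow> 0 < z \<Longrightarrow> phi p z > 0"
  using phi_strict_mono[of p 0 z] by simp

lemma phi_harm': "0 < p \<Longrightarrow> p < 1 \<Longrightarrow> 0 < z \<Longrightarrow>
   A + B * phi p z = p * (A + B * phi p (z+1)) + (1-p) * (A + B * phi p (z-1))"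
  by (rule phi_harm) auto

lemma u_formula:
  assumes p: "1/2 \<le> p" "p < 1" and N: "N \<ge> 1" and z: "0 \<le> z" "z \<le> int N"
  shows "pr p N 0 (\<lambda>w. w = 0) z = (phi p N - phi p z) / phi p N"
proof -
  have pN: "phi p N > 0" using phi_pos[of p "int N"] p N by simp
  have "pr p N 0 (\<lambda>w. w = 0) z = 1 + (- 1 / phi p N) * phi p z"
  proof (rule harm_uniq[of p 0 "int N"])
    show "pr p N 0 (\<lambda>w. w = 0) z' = p * pr p N 0 (\<lambda>w. w = 0) (z'+1) + (1-p) * pr p N 0 (\<lambda>w. w = 0) (z'-1)"
      if "0 < z'" "z' < int N" for z' using that p by (intro pr_rec) auto
    show "1 + (- 1 / phi p N) * phi p z' = p * (1 + (- 1 / phi p N) * phi p (z'+1)) + (1-p) * (1 + (- 1 / phi p N) * phi p (z'-1))"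
      if "0 < z'" "z' < int N" for z' using that p by (intro phi_harm') auto
    show "pr p N 0 (\<lambda>w. w = 0) 0 = 1 + (- 1 / phi p N) * phi p 0"
      by (simp add: pr_one Ev_at_t)
    show "pr p N 0 (\<lambda>w. w = 0) (int N) = 1 + (- 1 / phi p N) * phi p (int N)"
    proof -
      have "pr p N 0 (\<lambda>w. w = 0) (int N) = 0" by (rule pr_zero, rule Ev_bdry_false) (use pN N in auto)
      thus ?thesis using pN N by simp
    qed
  qed (use p z in auto)
  thus ?thesis using pN by (simp add: field_simps)
qed

lemma v_formula:
  assumes p: "1/2 \<le> p" "p < 1" and N: "N \<ge> 1" and z: "0 \<le> z" "z \<le> int N"
  shows "pr p N (int N) (\<lambda>w. w = int N) z = phi p z / phi p N"
proof -
  have pN: "phi p N > 0" using phi_pos[of p "int N"] p N by simp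
  have "pr p N (int N) (\<lambda>w. w = int N) z = 0 + (1 / phi p N) * phi p z"
  proof (rule harm_uniq[of p 0 "int N"])
    show "pr p N (int N) (\<lambda>w. w = int N) z' = p * pr p N (int N) (\<lambda>w. w = int N) (z'+1) + (1-p) * pr p N (int N) (\<lambda>w. w = int N) (z'-1)"
      if "0 < z'" "z' < int N" for z' using that p by (intro pr_rec) auto
    show "0 + (1 / phi p N) * phi p z' = p * (0 + (1 / phi p N) * phi p (z'+1)) + (1-p) * (0 + (1 / phi p N) * phi p (z'-1))"
      if "0 < z'" "z' < int N" for z' using that p by (intro phi_harm') auto
    show "pr p N (int N) (\<lambda>w. w = int N) (int N) = 0 + (1 / phi p N) * phi p (int N)"
      using pN by (simp add: pr_one Ev_at_t)
    show "pr p N (int N) (\<lambda>w. w = int N) 0 = 0 + (1 / phi p N) * phi p 0"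
    proof -
      have "pr p N (int N) (\<lambda>w. w = int N) 0 = 0" by (rule pr_zero, rule Ev_bdry_false) (use N in auto)
      thus ?thesis using N by simp
    qed
  qed (use p z in auto)
  thus ?thesis by simp
qed

lemma d_formula:
  assumes p: "1/2 \<le> p" "p < 1" and N: "N \<ge> 1" and y: "1 \<le> y" "y < int N" and z: "0 \<le> z" "z \<le> y"
  shows "pr p N 0 (\<lambda>w. w \<ge> y) z = (phi p N - phi p y) / phi p N * phi p z / phi p y"
proof -
  have py: "phi p y > 0" using phi_pos[of p y] p y by simp
  define U where "U = (phi p N - phi p y) / phi p N"
  have Uy: "pr p N 0 (\<lambda>w. w \<ge> y) y = U"
  proof -
    have "pr p N 0 (\<lambda>w. w \<ge> y) y = pr p N 0 (\<lambda>w. w = 0) y"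
      by (intro pr_cong) (simp add: Ev_Q_holds[of "\<lambda>w. w \<ge> y"] Ev_True_end)
    thus ?thesis using u_formula[OF p N, of y] y by (simp add: U_def)
  qed
  have "pr p N 0 (\<lambda>w. w \<ge> y) z = 0 + (U / phi p y) * phi p z"
  proof (rule harm_uniq[of p 0 y])
    show "pr p N 0 (\<lambda>w. w \<ge> y) z' = p * pr p N 0 (\<lambda>w. w \<ge> y) (z'+1) + (1-p) * pr p N 0 (\<lambda>w. w \<ge> y) (z'-1)"
      if "0 < z'" "z' < y" for z' using that p y by (intro pr_rec) auto
    show "0 + (U / phi p y) * phi p z' = p * (0 + (U / phi p y) * phi p (z'+1)) + (1-p) * (0 + (U / phi p y) * phi p (z'-1))"
      if "0 < z'" "z' < y" for z' using that p by (intro phi_harm') auto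
    show "pr p N 0 (\<lambda>w. w \<ge> y) y = 0 + (U / phi p y) * phi p y"
      using py Uy by simp
    show "pr p N 0 (\<lambda>w. w \<ge> y) 0 = 0 + (U / phi p y) * phi p 0"
    proof -
      have "pr p N 0 (\<lambda>w. w \<ge> y) 0 = 0" by (rule pr_zero, rule Ev_bdry_false) (use y in auto)
      thus ?thesis using y by simp
    qed
  qed (use p z in auto)
  thus ?thesis by (simp add: U_def)
qed

lemma e_formula:
  assumes p: "1/2 \<le> p" "p < 1" and N: "N \<ge> 1" and y: "1 \<le> y" "y < int N" and z: "y \<le> z" "z \<le> int N"
  shows "pr p N (int N) (\<lambda>w. w \<le> y) z = phi p y / phi p N * (phi p N - phi p z) / (phi p N - phi p y)"
proof -
  have pyN: "phi p N - phi p y > 0" using phi_strict_mono[of p y "int N"] p y by simp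
  define V where "V = phi p y / phi p N"
  define D where "D = phi p N - phi p y"
  have Dpos: "D > 0" using pyN by (simp add: D_def)
  define A where "A = V * phi p N / D"
  define B where "B = - V / D"
  have Vy: "pr p N (int N) (\<lambda>w. w \<le> y) y = V"
  proof -
    have "pr p N (int N) (\<lambda>w. w \<le> y) y = pr p N (int N) (\<lambda>w. w = int N) y"
      by (intro pr_cong) (simp add: Ev_Q_holds[of "\<lambda>w. w \<le> y"] Ev_True_end)
    thus ?thesis using v_formula[OF p N, of y] y by (simp add: V_def)
  qed
  have "pr p N (int N) (\<lambda>w. w \<le> y) z = A + B * phi p z"
  proof (rule harm_uniq[of p y "int N"])
    show "pr p N (int N) (\<lambda>w. w \<le> y) z' = p * pr p N (int N) (\<lambda>w. w \<le> y) (z'+1) + (1-p) * pr p N (int N) (\<lambda>w. w \<le> y) (z'-1)"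
      if "y < z'" "z' < int N" for z' using that p y by (intro pr_rec) auto
    show "A + B * phi p z' = p * (A + B * phi p (z'+1)) + (1-p) * (A + B * phi p (z'-1))"
      if "y < z'" "z' < int N" for z' using that p y by (intro phi_harm') auto
    show "pr p N (int N) (\<lambda>w. w \<le> y) y = A + B * phi p y"
    proof -
      have "A + B * phi p y = V * (phi p N - phi p y) / D" using Dpos by (simp add: A_def B_def field_simps)
      also have "\<dots> = V" using Dpos by (simp add: D_def)
      finally show ?thesis using Vy by simp
    qed
    show "pr p N (int N) (\<lambda>w. w \<le> y) (int N) = A + B * phi p (int N)"
    proof -
      have "pr p N (int N) (\<lambda>w. w \<le> y) (int N) = 0" by (rule pr_zero, rule Ev_bdry_false) (use y Dpos in auto)
      thus ?thesis using y Dpos by (simp add: A_def B_def field_simps)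
    qed
  qed (use p z y in auto)
  also have "A + B * phi p z = V * (phi p N - phi p z) / D" using Dpos by (simp add: A_def B_def field_simps)
  finally show ?thesis by (simp add: V_def D_def)
qed

lemma ivt_down:
  assumes "a \<le> b" "W z \<omega> b \<le> v" "v \<le> W z \<omega> a"
  shows "\<exists>k. a \<le> k \<and> k \<le> b \<and> W z \<omega> k = v"
  using assms
proof (induction b)
  case 0 thus ?case by (intro exI[of _ 0]) auto
next
  case (Suc b)
  show ?case
  proof (cases "a = Suc b")
    case True thus ?thesis using Suc.prems by (intro exI[of _ "Suc b"]) auto
  next
    case False
    hence ab: "a \<le> b" using Suc.prems by simp
    show ?thesis
    proof (cases "W z \<omega> b \<le> v")
      case True
      then obtain k where "a \<le> k" "k \<le> b" "W z \<omega> k = v" using Suc.IH[OF ab True Suc.prems(3)] by blast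
      thus ?thesis by (intro exI[of _ k]) auto
    next
      case False
      have "W z \<omega> (Suc b) = W z \<omega> b + 1 \<or> W z \<omega> (Suc b) = W z \<omega> b - 1" by (simp add: W_Suc stp_def)
      hence "W z \<omega> (Suc b) = v" using False Suc.prems(2,3) by linarith
      thus ?thesis using ab by (intro exI[of _ "Suc b"]) auto
    qed
  qed
qed

lemma ivt_up:
  assumes "a \<le> b" "v \<le> W z \<omega> b" "W z \<omega> a \<le> v"
  shows "\<exists>k. a \<le> k \<and> k \<le> b \<and> W z \<omega> k = v"
  using assms
proof (induction b)
  case 0 thus ?case by (intro exI[of _ 0]) auto
next
  case (Suc b)
  show ?case
  proof (cases "a = Suc b")
    case True thus ?thesis using Suc.prems by (intro exI[of _ "Suc b"]) auto
  next
    case False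
    hence ab: "a \<le> b" using Suc.prems by simp
    show ?thesis
    proof (cases "W z \<omega> b \<ge> v")
      case True
      then obtain k where "a \<le> k" "k \<le> b" "W z \<omega> k = v" using Suc.IH[OF ab True Suc.prems(3)] by blast
      thus ?thesis by (intro exI[of _ k]) auto
    next
      case False
      have "W z \<omega> (Suc b) = W z \<omega> b + 1 \<or> W z \<omega> (Suc b) = W z \<omega> b - 1" by (simp add: W_Suc stp_def)
      hence "W z \<omega> (Suc b) = v" using False Suc.prems(2,3) by linarith
      thus ?thesis using ab by (intro exI[of _ "Suc b"]) auto
    qed
  qed
qed

lemma hit_eq:
  assumes "W z \<omega> n \<le> 0 \<or> W z \<omega> n \<ge> int N" "\<forall>k<n. 0 < W z \<omega> k \<and> W z \<omega> k < int N"
    "W z \<omega> n' \<le> 0 \<or> W z \<omega> n' \<ge> int N" "\<forall>k<n'. 0 < W z \<omega> k \<and> W z \<omega> k < int N"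
  shows "n = n'"
proof (rule ccontr)
  assume "n \<noteq> n'"
  hence "n < n' \<or> n' < n" by auto
  thus False using assms by force
qed

lemma W_interior_before:
  assumes "0 < z" "z < int N" "\<forall>k. 1 \<le> k \<and> k < n \<longrightarrow> \<not>(W z \<omega> k = 0 \<or> W z \<omega> k = int N)"
  shows "k < n \<Longrightarrow> 0 < W z \<omega> k \<and> W z \<omega> k < int N"
proof (induction k)
  case 0 thus ?case using assms by simp
next
  case (Suc k)
  hence ih: "0 < W z \<omega> k \<and> W z \<omega> k < int N" by simp
  have "\<not>(W z \<omega> (Suc k) = 0 \<or> W z \<omega> (Suc k) = int N)" using assms(3) Suc.prems by auto
  moreover have "W z \<omega> (Suc k) = W z \<omega> k + 1 \<or> W z \<omega> (Suc k) = W z \<omega> k - 1" by (simp add: W_Suc stp_def)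
  ultimately show ?case using ih by linarith
qed

abbreviation "Z0 N z \<equiv> Ev N 0 (\<lambda>w. w = 0) z"
abbreviation "ZN N z \<equiv> Ev N (int N) (\<lambda>w. w = int N) z"

lemma exit_cases:
  assumes "0 < z" "z < int N" "\<exists>n\<ge>1. W z \<omega> n = 0 \<or> W z \<omega> n = int N"
  shows "Z0 N z \<omega> \<or> ZN N z \<omega>"
proof -
  define P where "P n = (n \<ge> 1 \<and> (W z \<omega> n = 0 \<or> W z \<omega> n = int N))" for n
  define n where "n = (LEAST n. P n)"
  have Pn: "P n" unfolding n_def using assms(3) P_def by (metis LeastI)
  have "\<forall>k. 1 \<le> k \<and> k < n \<longrightarrow> \<not>(W z \<omega> k = 0 \<or> W z \<omega> k = int N)"
    using not_less_Least[of _ P] unfolding n_def P_def by blast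
  hence int: "\<forall>k<n. 0 < W z \<omega> k \<and> W z \<omega> k < int N"
    using W_interior_before[OF assms(1,2)] by blast
  show ?thesis using Pn int unfolding P_def Ev_def by (metis order_refl)
qed

lemma no_exit_time:
  assumes "0 < x" "x < N" "\<not> Z0 N (int x) \<omega>" "\<not> ZN N (int x) \<omega>"
  shows "exit_time N x \<omega> = (LEAST n::nat. False)"
proof -
  have "(\<lambda>n. n \<ge> 1 \<and> (walk_pos x \<omega> n = 0 \<or> walk_pos x \<omega> n = int N)) = (\<lambda>n. False)"
    using exit_cases[of "int x" N \<omega>] assms by (auto simp: walk_pos_W)
  thus ?thesis unfolding exit_time_def by simp
qed

lemma exit_time_hit:
  assumes "0 < x" "x < N" "W (int x) \<omega> n = t" "t = 0 \<or> t = int N"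
    "\<forall>k<n. 0 < W (int x) \<omega> k \<and> W (int x) \<omega> k < int N"
  shows "exit_time N x \<omega> = n"
  unfolding exit_time_def walk_pos_W
proof (rule Least_equality)
  have "n \<noteq> 0"
  proof
    assume "n = 0" thus False using assms(1-4) by auto
  qed
  thus "1 \<le> n \<and> (W (int x) \<omega> n = 0 \<or> W (int x) \<omega> n = int N)" using assms by auto
  show "n \<le> m" if "1 \<le> m \<and> (W (int x) \<omega> m = 0 \<or> W (int x) \<omega> m = int N)" for m
    using that assms(5) by (metis leI less_irrefl)
qed

lemma range_walk_W: "range_walk N x \<omega> = card ({0..int N} \<inter> {W (int x) \<omega> k | k. k \<le> exit_time N x \<omega>})"
  unfolding range_walk_def walk_pos_W ..

lemma card_visit_0:
  assumes x: "0 < x" "x < N" and n: "W (int x) \<omega> n = 0" "\<forall>k<n. 0 < W (int x) \<omega> k \<and> W (int x) \<omega> k < int N"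
  shows "(m \<le> int (card ({0..int N} \<inter> {W (int x) \<omega> k | k. k \<le> n}))) \<longleftrightarrow> (\<exists>k\<le>n. W (int x) \<omega> k \<ge> m - 1)"
    (is "_ \<longleftrightarrow> ?R")
proof -
  define V where "V = {0..int N} \<inter> {W (int x) \<omega> k | k. k \<le> n}"
  have fin: "finite V" unfolding V_def by (rule finite_Int) simp
  have bnd: "0 \<le> W (int x) \<omega> k \<and> W (int x) \<omega> k \<le> int N" if "k \<le> n" for k
  proof (cases "k = n")
    case False hence "k < n" using that by simp
    hence "0 < W (int x) \<omega> k \<and> W (int x) \<omega> k < int N" using n(2) by blast
    thus ?thesis by linarith
  qed (use n in simp)
  show ?thesis unfolding V_def[symmetric]
  proof
    assume R: ?R
    then obtain k0 where k0: "k0 \<le> n" "W (int x) \<omega> k0 \<ge> m - 1" by blast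
    show "m \<le> int (card V)"
    proof (cases "m \<le> 0")
      case True thus ?thesis by simp
    next
      case False
      have "{0..m-1} \<subseteq> V"
      proof
        fix v assume v: "v \<in> {0..m-1}"
        obtain k where k: "k0 \<le> k" "k \<le> n" "W (int x) \<omega> k = v"
          using ivt_down[of k0 n "int x" \<omega> v] k0 v n by auto
        show "v \<in> V" unfolding V_def using k bnd[of k] by auto
      qed
      hence "card {0..m-1} \<le> card V" using fin by (rule card_mono[rotated])
      thus ?thesis using False by simp
    qed
  next
    assume m: "m \<le> int (card V)"
    show ?R
    proof (rule ccontr)
      assume nR: "\<not> ?R"
      have nR': "\<forall>k\<le>n. W (int x) \<omega> k < m - 1" using nR by (meson not_le)
      have "V \<subseteq> {0..m-2}"
      proof
        fix v assume v: "v \<in> V"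
        have "v \<in> {W (int x) \<omega> k | k. k \<le> n}" "0 \<le> v" using v unfolding V_def by auto
        then obtain k where k: "k \<le> n" "v = W (int x) \<omega> k" by blast
        have "v < m - 1" using nR' k by simp
        thus "v \<in> {0..m-2}" using \<open>0 \<le> v\<close> by simp
      qed
      hence "card V \<le> card {0..m-2}" by (rule card_mono[rotated]) simp
      moreover have "W (int x) \<omega> 0 < m - 1" using nR'[rule_format, of 0] by simp
      hence "m \<ge> 1" using x by simp
      ultimately show False using m by simp
    qed
  qed
qed

lemma card_visit_N:
  assumes x: "0 < x" "x < N" and n: "W (int x) \<omega> n = int N" "\<forall>k<n. 0 < W (int x) \<omega> k \<and> W (int x) \<omega> k < int N"
  shows "(m \<le> int (card ({0..int N} \<inter> {W (int x) \<omega> k | k. k \<le> n}))) \<longleftrightarrow> (\<exists>k\<le>n. W (int x) \<omega> k \<le> int N - m + 1)"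
    (is "_ \<longleftrightarrow> ?R")
proof -
  define V where "V = {0..int N} \<inter> {W (int x) \<omega> k | k. k \<le> n}"
  have fin: "finite V" unfolding V_def by (rule finite_Int) simp
  have bnd: "0 \<le> W (int x) \<omega> k \<and> W (int x) \<omega> k \<le> int N" if "k \<le> n" for k
  proof (cases "k = n")
    case False hence "k < n" using that by simp
    hence "0 < W (int x) \<omega> k \<and> W (int x) \<omega> k < int N" using n(2) by blast
    thus ?thesis by linarith
  qed (use n in simp)
  show ?thesis unfolding V_def[symmetric]
  proof
    assume R: ?R
    then obtain k0 where k0: "k0 \<le> n" "W (int x) \<omega> k0 \<le> int N - m + 1" by blast
    show "m \<le> int (card V)"
    proof (cases "m \<le> 0")
      case True thus ?thesis by simp
    next
      case False
      have "{int N - m + 1..int N} \<subseteq> V"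
      proof
        fix v assume v: "v \<in> {int N - m + 1..int N}"
        obtain k where k: "k0 \<le> k" "k \<le> n" "W (int x) \<omega> k = v"
          using ivt_up[of k0 n v "int x" \<omega>] k0 v n by auto
        show "v \<in> V" unfolding V_def using k bnd[of k] by auto
      qed
      hence "card {int N - m + 1..int N} \<le> card V" using fin by (rule card_mono[rotated])
      thus ?thesis using False by simp
    qed
  next
    assume m: "m \<le> int (card V)"
    show ?R
    proof (rule ccontr)
      assume nR: "\<not> ?R"
      have nR': "\<forall>k\<le>n. W (int x) \<omega> k > int N - m + 1" using nR by (meson not_le)
      have "V \<subseteq> {int N - m + 2..int N}"
      proof
        fix v assume v: "v \<in> V"
        have "v \<in> {W (int x) \<omega> k | k. k \<le> n}" "v \<le> int N" using v unfolding V_def by auto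
        then obtain k where k: "k \<le> n" "v = W (int x) \<omega> k" by blast
        have "v > int N - m + 1" using nR' k by simp
        thus "v \<in> {int N - m + 2..int N}" using \<open>v \<le> int N\<close> by simp
      qed
      hence "card V \<le> card {int N - m + 2..int N}" by (rule card_mono[rotated]) simp
      moreover have "W (int x) \<omega> 0 > int N - m + 1" using nR'[rule_format, of 0] by simp
      hence "m \<ge> 1" using x by simp
      ultimately show False using m by simp
    qed
  qed
qed

lemma Ev_imp_end: "Ev N t Q z \<omega> \<Longrightarrow> Ev N t (\<lambda>w. w = t) z \<omega>"
  unfolding Ev_def by (metis order_refl)

lemma Ev_time:
  assumes "Ev N t Q z \<omega>" "t = 0 \<or> t = int N"
    "W z \<omega> n \<le> 0 \<or> W z \<omega> n \<ge> int N" "\<forall>k<n. 0 < W z \<omega> k \<and> W z \<omega> k < int N"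
  shows "W z \<omega> n = t \<and> (\<exists>k\<le>n. Q (W z \<omega> k))"
proof -
  obtain n' where n': "W z \<omega> n' = t" "\<forall>k<n'. 0 < W z \<omega> k \<and> W z \<omega> k < int N"
     "\<exists>k\<le>n'. Q (W z \<omega> k)" using assms(1) unfolding Ev_def by blast
  have "n' = n" by (rule hit_eq[of z \<omega> n' N n]) (use n' assms in auto)
  thus ?thesis using n' by simp
qed

definition c0 :: nat where "c0 = (LEAST n::nat. False)"

lemma range_char:
  assumes x: "0 < x" "x < N"
  shows "(m \<le> int (range_walk N x \<omega>)) \<longleftrightarrow>
    (Ev N 0 (\<lambda>w. w \<ge> m - 1) (int x) \<omega> \<or> Ev N (int N) (\<lambda>w. w \<le> int N - m + 1) (int x) \<omega> \<or>
     (\<not> Z0 N (int x) \<omega> \<and> \<not> ZN N (int x) \<omega> \<and> m \<le> int (card ({0..int N} \<inter> {W (int x) \<omega> k | k. k \<le> c0}))))"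
proof (cases "Z0 N (int x) \<omega>")
  case True
  then obtain n where n: "W (int x) \<omega> n = 0" "\<forall>k<n. 0 < W (int x) \<omega> k \<and> W (int x) \<omega> k < int N"
    unfolding Ev_def by blast
  have et: "exit_time N x \<omega> = n" by (rule exit_time_hit[OF x n(1) _ n(2)]) simp
  have nE: "\<not> Ev N (int N) Q (int x) \<omega>" for Q
  proof
    assume "Ev N (int N) Q (int x) \<omega>"
    from Ev_time[OF this _ _ n(2)] n(1) x show False by simp
  qed
  have "Ev N 0 (\<lambda>w. w \<ge> m - 1) (int x) \<omega> \<longleftrightarrow> (\<exists>k\<le>n. W (int x) \<omega> k \<ge> m - 1)"
  proof
    assume "Ev N 0 (\<lambda>w. w \<ge> m - 1) (int x) \<omega>"
    from Ev_time[OF this _ _ n(2)] n(1) show "\<exists>k\<le>n. W (int x) \<omega> k \<ge> m - 1" by simp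
  next
    assume "\<exists>k\<le>n. W (int x) \<omega> k \<ge> m - 1"
    thus "Ev N 0 (\<lambda>w. w \<ge> m - 1) (int x) \<omega>" using n unfolding Ev_def by blast
  qed
  moreover have "(m \<le> int (range_walk N x \<omega>)) \<longleftrightarrow> (\<exists>k\<le>n. W (int x) \<omega> k \<ge> m - 1)"
    unfolding range_walk_W et by (rule card_visit_0[OF x n])
  ultimately show ?thesis using nE True by blast
next
  case F0: False
  show ?thesis
  proof (cases "ZN N (int x) \<omega>")
    case True
    then obtain n where n: "W (int x) \<omega> n = int N" "\<forall>k<n. 0 < W (int x) \<omega> k \<and> W (int x) \<omega> k < int N"
      unfolding Ev_def by blast
    have et: "exit_time N x \<omega> = n" by (rule exit_time_hit[OF x n(1) _ n(2)]) simp
    have nE: "\<not> Ev N 0 Q (int x) \<omega>" for Q using F0 Ev_imp_end by blast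
    have "Ev N (int N) (\<lambda>w. w \<le> int N - m + 1) (int x) \<omega> \<longleftrightarrow> (\<exists>k\<le>n. W (int x) \<omega> k \<le> int N - m + 1)"
    proof
      assume "Ev N (int N) (\<lambda>w. w \<le> int N - m + 1) (int x) \<omega>"
      from Ev_time[OF this _ _ n(2)] n(1) show "\<exists>k\<le>n. W (int x) \<omega> k \<le> int N - m + 1" by simp
    next
      assume "\<exists>k\<le>n. W (int x) \<omega> k \<le> int N - m + 1"
      thus "Ev N (int N) (\<lambda>w. w \<le> int N - m + 1) (int x) \<omega>" using n unfolding Ev_def by blast
    qed
    moreover have "(m \<le> int (range_walk N x \<omega>)) \<longleftrightarrow> (\<exists>k\<le>n. W (int x) \<omega> k \<le> int N - m + 1)"
      unfolding range_walk_W et by (rule card_visit_N[OF x n])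
    ultimately show ?thesis using nE True by blast
  next
    case False
    have et: "exit_time N x \<omega> = c0" unfolding c0_def by (rule no_exit_time[OF x F0 False])
    have n1: "\<not> Ev N 0 Q (int x) \<omega>" for Q using F0 Ev_imp_end by blast
    have n2: "\<not> Ev N (int N) Q (int x) \<omega>" for Q using False Ev_imp_end by blast
    show ?thesis unfolding range_walk_W et using n1 n2 F0 False by blast
  qed
qed

lemma visit_stake: "{W z \<omega> k | k. k \<le> c} = {z + (\<Sum>i<k. stp (stake c \<omega> ! i)) | k. k \<le> c}"
  by (intro Collect_cong ex_cong1) (auto simp: W_def sum_stake)

lemma range_set_eq:
  assumes x: "0 < x" "x < N"
  shows "{\<omega> \<in> space (path_space p). m \<le> int (range_walk N x \<omega>)} =
    {\<omega> \<in> space (path_space p). Ev N 0 (\<lambda>w. w \<ge> m - 1) (int x) \<omega>} \<union>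
    {\<omega> \<in> space (path_space p). Ev N (int N) (\<lambda>w. w \<le> int N - m + 1) (int x) \<omega>} \<union>
    {\<omega> \<in> space (path_space p). \<not> Z0 N (int x) \<omega> \<and> \<not> ZN N (int x) \<omega> \<and>
       m \<le> int (card ({0..int N} \<inter> {int x + (\<Sum>i<k. stp (stake c0 \<omega> ! i)) | k. k \<le> c0}))}"
  using range_char[OF x, of m] unfolding visit_stake by blast

lemma range_sets:
  assumes x: "0 < x" "x < N"
  shows "{\<omega> \<in> space (path_space p). m \<le> int (range_walk N x \<omega>)} \<in> sets (path_space p)"
  by (subst range_set_eq[OF x]) (unfold path_space_def, measurable)

lemma range_prob:
  assumes p: "1/2 \<le> p" "p < 1" and x: "0 < x" "x < N"
  shows "measure (path_space p) {\<omega> \<in> space (path_space p). m \<le> int (range_walk N x \<omega>)} =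
    pr p N 0 (\<lambda>w. w \<ge> m - 1) (int x) + pr p N (int N) (\<lambda>w. w \<le> int N - m + 1) (int x)"
proof -
  interpret S: prob_space "path_space p" by (rule prob_space_path)
  have N: "N \<ge> 1" using x by simp
  define A where "A = {\<omega> \<in> space (path_space p). Ev N 0 (\<lambda>w. w \<ge> m - 1) (int x) \<omega>}"
  define B where "B = {\<omega> \<in> space (path_space p). Ev N (int N) (\<lambda>w. w \<le> int N - m + 1) (int x) \<omega>}"
  define C where "C = {\<omega> \<in> space (path_space p). \<not> Z0 N (int x) \<omega> \<and> \<not> ZN N (int x) \<omega> \<and>
       m \<le> int (card ({0..int N} \<inter> {int x + (\<Sum>i<k. stp (stake c0 \<omega> ! i)) | k. k \<le> c0}))}"
  define E0 where "E0 = {\<omega> \<in> space (path_space p). Z0 N (int x) \<omega>}"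
  define EN where "EN = {\<omega> \<in> space (path_space p). ZN N (int x) \<omega>}"
  have sets: "A \<in> S.events" "B \<in> S.events" "C \<in> S.events" "E0 \<in> S.events" "EN \<in> S.events"
    unfolding A_def B_def C_def E0_def EN_def path_space_def by measurable
  have disj: "E0 \<inter> EN = {}"
  proof -
    have "\<not> (Z0 N (int x) \<omega> \<and> ZN N (int x) \<omega>)" for \<omega>
    proof
      assume a: "Z0 N (int x) \<omega> \<and> ZN N (int x) \<omega>"
      then obtain n where n: "W (int x) \<omega> n = 0" "\<forall>k<n. 0 < W (int x) \<omega> k \<and> W (int x) \<omega> k < int N"
        unfolding Ev_def by blast
      from Ev_time[OF conjunct2[OF a] _ _ n(2)] n(1) N show False by simp
    qed
    thus ?thesis unfolding E0_def EN_def by blast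
  qed
  have "S.prob (E0 \<union> EN) = S.prob E0 + S.prob EN" using sets disj by (intro S.finite_measure_Union) auto
  also have "S.prob E0 = (phi p N - phi p x) / phi p N"
    using u_formula[OF p N, of "int x"] x unfolding pr_def E0_def by simp
  also have "S.prob EN = phi p x / phi p N"
    using v_formula[OF p N, of "int x"] x unfolding pr_def EN_def by simp
  also have "(phi p N - phi p x) / phi p N + phi p x / phi p N = 1"
    using phi_pos[OF p, of "int N"] N by (simp add: field_simps)
  finally have one: "S.prob (E0 \<union> EN) = 1" .
  have "S.prob (space (path_space p) - (E0 \<union> EN)) = 0"
    using one sets by (subst S.prob_compl) auto
  hence null: "space (path_space p) - (E0 \<union> EN) \<in> null_sets (path_space p)"
    using sets by (simp add: S.emeasure_eq_measure null_sets_def)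
  have "C \<subseteq> space (path_space p) - (E0 \<union> EN)" unfolding C_def E0_def EN_def by blast
  hence Cnull: "C \<in> null_sets (path_space p)" by (rule null_sets_subset[OF null sets(3)])
  have AB: "A \<inter> B = {}" using disj Ev_imp_end unfolding A_def B_def E0_def EN_def by blast
  have "measure (path_space p) {\<omega> \<in> space (path_space p). m \<le> int (range_walk N x \<omega>)} = S.prob (A \<union> B \<union> C)"
    unfolding range_set_eq[OF x] A_def B_def C_def ..
  also have "\<dots> = S.prob (A \<union> B)" using sets Cnull by (intro measure_Un_null_set) auto
  also have "\<dots> = S.prob A + S.prob B" using sets AB by (intro S.finite_measure_Union) auto
  finally show ?thesis unfolding A_def B_def pr_def .
qed

definition FF :: "real \<Rightarrow> real \<Rightarrow> real \<Rightarrow> real \<Rightarrow> real" where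
  "FF A B C E = (E - B) / E * A / B + C / E * (E - A) / (E - C)"

lemma Ev_both_hold: "Q z \<Longrightarrow> Q' z \<Longrightarrow> Ev N t Q z \<omega> = Ev N t Q' z \<omega>"
  using Ev_Q_holds[of Q z] Ev_Q_holds[of Q' z] by simp

lemma range_exact:
  assumes p: "1/2 \<le> p" "p < 1" and x: "0 < x" "x < N" and m: "m \<le> int N"
  shows "measure (path_space p) {\<omega> \<in> space (path_space p). m \<le> int (range_walk N x \<omega>)} =
    FF (phi p x) (phi p (max (int x) (m - 1))) (phi p (min (int x) (int N - m + 1))) (phi p N)"
proof -
  have N: "N \<ge> 1" using x by simp
  define yh where "yh = max (int x) (m - 1)"
  define yc where "yc = min (int x) (int N - m + 1)"
  have 1: "pr p N 0 (\<lambda>w. w \<ge> m - 1) (int x) = pr p N 0 (\<lambda>w. w \<ge> yh) (int x)"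
  proof (cases "m - 1 \<le> int x")
    case True thus ?thesis unfolding yh_def by (intro pr_cong Ev_both_hold) auto
  next
    case False thus ?thesis unfolding yh_def by (simp add: max_def)
  qed
  have 2: "pr p N (int N) (\<lambda>w. w \<le> int N - m + 1) (int x) = pr p N (int N) (\<lambda>w. w \<le> yc) (int x)"
  proof (cases "int N - m + 1 \<ge> int x")
    case True thus ?thesis unfolding yc_def by (intro pr_cong Ev_both_hold) auto
  next
    case False thus ?thesis unfolding yc_def by (simp add: min_def)
  qed
  have 3: "pr p N 0 (\<lambda>w. w \<ge> yh) (int x) = (phi p N - phi p yh) / phi p N * phi p x / phi p yh"
    by (rule d_formula[OF p N]) (use x m in \<open>auto simp: yh_def\<close>)
  have 4: "pr p N (int N) (\<lambda>w. w \<le> yc) (int x) = phi p yc / phi p N * (phi p N - phi p x) / (phi p N - phi p yc)"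
    by (rule e_formula[OF p N]) (use x m in \<open>auto simp: yc_def\<close>)
  show ?thesis unfolding range_prob[OF p x] 1 2 3 4 FF_def yh_def[symmetric] yc_def[symmetric]
    by (simp add: mult.assoc)
qed

lemma FF_scale: "K > 0 \<Longrightarrow> FF (A/K) (B/K) (C/K) (E/K) = FF A B C E"
proof -
  assume K: "K > 0"
  have e1: "(E/K - B/K) / (E/K) = (E - B)/E" using K by (simp add: diff_divide_distrib[symmetric])
  have e2: "(A/K) / (B/K) = A / B" using K by simp
  have e3: "(C/K) / (E/K) = C / E" using K by simp
  have e4: "(E/K - A/K) / (E/K - C/K) = (E - A) / (E - C)"
    using K by (simp add: diff_divide_distrib[symmetric])
  have "FF (A/K) (B/K) (C/K) (E/K) = (E/K - B/K) / (E/K) * ((A/K) / (B/K)) + (C/K) / (E/K) * ((E/K - A/K) / (E/K - C/K))"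
    unfolding FF_def by (simp add: mult.assoc)
  also have "\<dots> = (E - B)/E * (A / B) + C / E * ((E - A) / (E - C))" unfolding e1 e2 e3 e4 ..
  finally show ?thesis unfolding FF_def by (simp add: mult.assoc)
qed

lemma FF_cont:
  assumes "(a \<longlongrightarrow> A) F" "(b \<longlongrightarrow> B) F" "(c \<longlongrightarrow> C) F" "(e \<longlongrightarrow> E) F" "B \<noteq> 0" "E \<noteq> 0" "E - C \<noteq> 0"
  shows "((\<lambda>n. FF (a n) (b n) (c n) (e n)) \<longlongrightarrow> FF A B C E) F"
  unfolding FF_def using assms by (intro tendsto_intros) auto

lemma ratio_max: "(N::real) > 0 \<Longrightarrow> real_of_int (max a b) / N = max (real_of_int a / N) (real_of_int b / N)"
  by (auto simp: max_def divide_le_cancel)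

lemma ratio_min: "(N::real) > 0 \<Longrightarrow> real_of_int (min a b) / N = min (real_of_int a / N) (real_of_int b / N)"
  by (auto simp: min_def divide_le_cancel)

lemma inv_real_lim: "(\<lambda>N. 1 / real N) \<longlonglongrightarrow> 0"
  using lim_inverse_n' by (simp add: inverse_eq_divide)

lemma tail_limit:
  fixes p K :: "nat \<Rightarrow> real" and x :: "nat \<Rightarrow> nat" and m :: "nat \<Rightarrow> int" and \<Phi> :: "real \<Rightarrow> real"
  assumes p: "eventually (\<lambda>N. 1/2 \<le> p N \<and> p N < 1) sequentially"
    and K: "eventually (\<lambda>N. K N > 0) sequentially"
    and psi: "\<And>z \<zeta>. (\<lambda>N. real_of_int (z N) / real N) \<longlonglongrightarrow> \<zeta> \<Longrightarrow> 0 \<le> \<zeta> \<Longrightarrow> \<zeta> \<le> 1 \<Longrightarrow>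
       eventually (\<lambda>N. 0 \<le> z N) sequentially \<Longrightarrow> (\<lambda>N. phi (p N) (z N) / K N) \<longlonglongrightarrow> \<Phi> \<zeta>"
    and x: "(\<lambda>N. real (x N) / real N) \<longlonglongrightarrow> \<alpha>" "eventually (\<lambda>N. 0 < x N \<and> x N < N) sequentially" "0 \<le> \<alpha>" "\<alpha> \<le> 1"
    and m: "(\<lambda>N. real_of_int (m N) / real N) \<longlonglongrightarrow> \<beta>" "eventually (\<lambda>N. m N \<le> int N) sequentially" "0 \<le> \<beta>" "\<beta> \<le> 1"
    and nz: "\<Phi> (max \<alpha> \<beta>) \<noteq> 0" "\<Phi> 1 \<noteq> 0" "\<Phi> 1 - \<Phi> (min \<alpha> (1-\<beta>)) \<noteq> 0"
  shows "(\<lambda>N. measure (path_space (p N)) {\<omega> \<in> space (path_space (p N)). m N \<le> int (range_walk N (x N) \<omega>)})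
     \<longlonglongrightarrow> FF (\<Phi> \<alpha>) (\<Phi> (max \<alpha> \<beta>)) (\<Phi> (min \<alpha> (1-\<beta>))) (\<Phi> 1)"
proof -
  define yh where "yh N = max (int (x N)) (m N - 1)" for N
  define yc where "yc N = min (int (x N)) (int N - m N + 1)" for N
  have Npos: "eventually (\<lambda>N. real N > 0) sequentially" using eventually_gt_at_top[of 0] by eventually_elim simp
  have lx: "(\<lambda>N. phi (p N) (int (x N)) / K N) \<longlonglongrightarrow> \<Phi> \<alpha>"
    using x by (intro psi) (auto elim!: eventually_mono)
  have m1: "(\<lambda>N. real_of_int (m N - 1) / real N) \<longlonglongrightarrow> \<beta>"
  proof -
    have "(\<lambda>N. real_of_int (m N) / real N - 1 / real N) \<longlonglongrightarrow> \<beta> - 0"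
      by (intro tendsto_intros m(1) inv_real_lim)
    thus ?thesis by (simp add: diff_divide_distrib)
  qed
  have lyh: "(\<lambda>N. phi (p N) (yh N) / K N) \<longlonglongrightarrow> \<Phi> (max \<alpha> \<beta>)"
  proof (rule psi)
    have "(\<lambda>N. max (real_of_int (int (x N)) / real N) (real_of_int (m N - 1) / real N)) \<longlonglongrightarrow> max \<alpha> \<beta>"
      using x(1) m1 by (intro tendsto_intros) auto
    thus "(\<lambda>N. real_of_int (yh N) / real N) \<longlonglongrightarrow> max \<alpha> \<beta>"
      by (rule Lim_transform_eventually) (use Npos in \<open>eventually_elim, simp add: yh_def ratio_max\<close>)
    show "eventually (\<lambda>N. 0 \<le> yh N) sequentially" using x(2) by eventually_elim (auto simp: yh_def)
  qed (use x m in auto)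
  have mc: "(\<lambda>N. real_of_int (int N - m N + 1) / real N) \<longlonglongrightarrow> 1 - \<beta>"
  proof -
    have "(\<lambda>N. 1 - real_of_int (m N) / real N + 1 / real N) \<longlonglongrightarrow> 1 - \<beta> + 0"
      by (intro tendsto_intros m(1) inv_real_lim)
    hence "(\<lambda>N. 1 - real_of_int (m N) / real N + 1 / real N) \<longlonglongrightarrow> 1 - \<beta>" by simp
    thus ?thesis
      by (rule Lim_transform_eventually) (use Npos in \<open>eventually_elim, simp add: field_simps\<close>)
  qed
  have lyc: "(\<lambda>N. phi (p N) (yc N) / K N) \<longlonglongrightarrow> \<Phi> (min \<alpha> (1 - \<beta>))"
  proof (rule psi)
    have "(\<lambda>N. min (real_of_int (int (x N)) / real N) (real_of_int (int N - m N + 1) / real N)) \<longlonglongrightarrow> min \<alpha> (1 - \<beta>)"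
      using x(1) mc by (intro tendsto_intros) auto
    thus "(\<lambda>N. real_of_int (yc N) / real N) \<longlonglongrightarrow> min \<alpha> (1 - \<beta>)"
      by (rule Lim_transform_eventually) (use Npos in \<open>eventually_elim, simp add: yc_def ratio_min\<close>)
    show "eventually (\<lambda>N. 0 \<le> yc N) sequentially" using x(2) m(2) by eventually_elim (auto simp: yc_def)
  qed (use x m in auto)
  have lN: "(\<lambda>N. phi (p N) (int N) / K N) \<longlonglongrightarrow> \<Phi> 1"
  proof (rule psi)
    show "(\<lambda>N. real_of_int (int N) / real N) \<longlonglongrightarrow> 1"
      by (rule Lim_transform_eventually[OF tendsto_const]) (use Npos in \<open>eventually_elim, simp\<close>)
  qed auto
  have "(\<lambda>N. FF (phi (p N) (int (x N)) / K N) (phi (p N) (yh N) / K N) (phi (p N) (yc N) / K N) (phi (p N) (int N) / K N))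
      \<longlonglongrightarrow> FF (\<Phi> \<alpha>) (\<Phi> (max \<alpha> \<beta>)) (\<Phi> (min \<alpha> (1-\<beta>))) (\<Phi> 1)"
    by (rule FF_cont[OF lx lyh lyc lN nz])
  thus ?thesis
  proof (rule Lim_transform_eventually)
    show "eventually (\<lambda>N. FF (phi (p N) (int (x N)) / K N) (phi (p N) (yh N) / K N) (phi (p N) (yc N) / K N) (phi (p N) (int N) / K N)
      = measure (path_space (p N)) {\<omega> \<in> space (path_space (p N)). m N \<le> int (range_walk N (x N) \<omega>)}) sequentially"
      using p K x(2) m(2)
    proof eventually_elim
      case (elim N)
      show ?case unfolding FF_scale[OF elim(2)] range_exact[of "p N" "x N" N "m N"] yh_def yc_def
        using elim by (subst range_exact) auto
    qed
  qed
qed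

lemma floor_ratio: "(\<lambda>N. real_of_int \<lfloor>a * real N\<rfloor> / real N) \<longlonglongrightarrow> a"
proof (rule tendsto_sandwich)
  show "eventually (\<lambda>N. a - 1 / real N \<le> real_of_int \<lfloor>a * real N\<rfloor> / real N) sequentially"
    using eventually_gt_at_top[of 0]
  proof eventually_elim
    case (elim N)
    have "a * real N - 1 \<le> real_of_int \<lfloor>a * real N\<rfloor>" by linarith
    hence "(a * real N - 1) / real N \<le> real_of_int \<lfloor>a * real N\<rfloor> / real N"
      using elim by (intro divide_right_mono) auto
    moreover have "(a * real N - 1) / real N = a - 1 / real N" using elim by (simp add: field_simps)
    ultimately show ?case by simp
  qed
  show "eventually (\<lambda>N. real_of_int \<lfloor>a * real N\<rfloor> / real N \<le> a) sequentially"
    using eventually_gt_at_top[of 0]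
  proof eventually_elim
    case (elim N)
    have "real_of_int \<lfloor>a * real N\<rfloor> \<le> a * real N" by linarith
    thus ?case using elim by (simp add: field_simps)
  qed
  have "(\<lambda>N. a - 1 / real N) \<longlonglongrightarrow> a - 0" by (intro tendsto_intros inv_real_lim)
  thus "(\<lambda>N. a - 1 / real N) \<longlonglongrightarrow> a" by simp
qed simp

lemma ceiling_ratio: "(\<lambda>N. real_of_int \<lceil>a * real N\<rceil> / real N) \<longlonglongrightarrow> a"
proof (rule tendsto_sandwich)
  show "eventually (\<lambda>N. a \<le> real_of_int \<lceil>a * real N\<rceil> / real N) sequentially"
    using eventually_gt_at_top[of 0]
  proof eventually_elim
    case (elim N)
    have "a * real N \<le> real_of_int \<lceil>a * real N\<rceil>" by linarith
    thus ?case using elim by (simp add: field_simps)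
  qed
  show "eventually (\<lambda>N. real_of_int \<lceil>a * real N\<rceil> / real N \<le> a + 1 / real N) sequentially"
    using eventually_gt_at_top[of 0]
  proof eventually_elim
    case (elim N)
    have "real_of_int \<lceil>a * real N\<rceil> \<le> a * real N + 1" by linarith
    thus ?case using elim by (simp add: field_simps)
  qed
  have "(\<lambda>N. a + 1 / real N) \<longlonglongrightarrow> a + 0" by (intro tendsto_intros inv_real_lim)
  thus "(\<lambda>N. a + 1 / real N) \<longlonglongrightarrow> a" by simp
qed simp

lemma floor1_ratio: "(\<lambda>N. real_of_int (\<lfloor>a * real N\<rfloor> + 1) / real N) \<longlonglongrightarrow> a"
proof -
  have "(\<lambda>N. real_of_int \<lfloor>a * real N\<rfloor> / real N + 1 / real N) \<longlonglongrightarrow> a + 0"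
    by (intro tendsto_intros floor_ratio inv_real_lim)
  thus ?thesis by (simp add: add_divide_distrib)
qed

lemma start_pt_props:
  assumes "0 < \<alpha>" "\<alpha> < 1"
  shows "(\<lambda>N. real (start_pt \<alpha> N) / real N) \<longlonglongrightarrow> \<alpha>"
    and "eventually (\<lambda>N. 0 < start_pt \<alpha> N \<and> start_pt \<alpha> N < N) sequentially"
proof -
  have "real (start_pt \<alpha> N) = real_of_int \<lfloor>\<alpha> * real N\<rfloor>" for N
    using assms unfolding start_pt_def by simp
  thus "(\<lambda>N. real (start_pt \<alpha> N) / real N) \<longlonglongrightarrow> \<alpha>" using floor_ratio[of \<alpha>] by simp
  show "eventually (\<lambda>N. 0 < start_pt \<alpha> N \<and> start_pt \<alpha> N < N) sequentially"
    using eventually_ge_at_top[of "nat \<lceil>1/\<alpha>\<rceil> + 1"]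
  proof eventually_elim
    case (elim N)
    have "real N \<ge> 1/\<alpha>" using elim by linarith
    hence "\<alpha> * real N \<ge> 1" using assms by (simp add: field_simps)
    hence 1: "\<lfloor>\<alpha> * real N\<rfloor> \<ge> 1" by linarith
    have "N \<ge> 1" using elim by simp
    hence "\<alpha> * real N < real N" using assms by simp
    hence 2: "\<lfloor>\<alpha> * real N\<rfloor> < int N" by linarith
    show ?case using 1 2 unfolding start_pt_def by linarith
  qed
qed

definition Phiw :: "real \<Rightarrow> real \<Rightarrow> real" where "Phiw c z = 1 - exp (- 4 * c * z)"

lemma log_lim: "c > 0 \<Longrightarrow> (\<lambda>N. real N * ln ((1 - (1/2 + c / real N)) / (1/2 + c / real N))) \<longlonglongrightarrow> -4*c"
proof -
  assume c: "c > 0"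
  have "((\<lambda>t::real. t * ln ((1 - (1/2 + c/t)) / (1/2 + c/t))) \<longlongrightarrow> -4*c) at_top"
    using c by real_asymp
  thus ?thesis by (rule filterlim_compose) (rule filterlim_real_sequentially)
qed

lemma sym_tail:
  assumes a: "0 < \<alpha>" "\<alpha> < 1" and m: "(\<lambda>N. real_of_int (m N) / real N) \<longlonglongrightarrow> \<beta>"
    "eventually (\<lambda>N. m N \<le> int N) sequentially" "0 \<le> \<beta>" "\<beta> \<le> 1"
  shows "(\<lambda>N. measure (path_space (1/2)) {\<omega> \<in> space (path_space (1/2)). m N \<le> int (range_walk N (start_pt \<alpha> N) \<omega>)})
     \<longlonglongrightarrow> FF \<alpha> (max \<alpha> \<beta>) (min \<alpha> (1-\<beta>)) 1"
proof -
  have "(\<lambda>N. measure (path_space ((\<lambda>_. 1/2) N)) {\<omega> \<in> space (path_space ((\<lambda>_. 1/2) N)). m N \<le> int (range_walk N (start_pt \<alpha> N) \<omega>)})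
     \<longlonglongrightarrow> FF (id \<alpha>) (id (max \<alpha> \<beta>)) (id (min \<alpha> (1-\<beta>))) (id 1)"
  proof (rule tail_limit[where K = "\<lambda>N. real N"])
    show "eventually (\<lambda>N. 0 < real N) sequentially" using eventually_gt_at_top[of 0] by eventually_elim simp
    show "(\<lambda>N. phi (1/2) (z N) / real N) \<longlonglongrightarrow> id \<zeta>" if "(\<lambda>N. real_of_int (z N) / real N) \<longlonglongrightarrow> \<zeta>" for z \<zeta>
      using that by (simp add: phi_def)
  qed (use a m start_pt_props[OF a] in auto)
  thus ?thesis by simp
qed

lemma weak_tail:
  assumes a: "0 < \<alpha>" "\<alpha> < 1" and c: "c > 0" and m: "(\<lambda>N. real_of_int (m N) / real N) \<longlonglongrightarrow> \<beta>"
    "eventually (\<lambda>N. m N \<le> int N) sequentially" "0 \<le> \<beta>" "\<beta> \<le> 1"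
  shows "(\<lambda>N. measure (path_space (1/2 + c / real N)) {\<omega> \<in> space (path_space (1/2 + c / real N)). m N \<le> int (range_walk N (start_pt \<alpha> N) \<omega>)})
     \<longlonglongrightarrow> FF (Phiw c \<alpha>) (Phiw c (max \<alpha> \<beta>)) (Phiw c (min \<alpha> (1-\<beta>))) (Phiw c 1)"
proof -
  have ev: "eventually (\<lambda>N. real N > 2 * c) sequentially"
    using eventually_ge_at_top[of "nat \<lceil>2*c\<rceil> + 1"] by eventually_elim linarith
  have "(\<lambda>N. measure (path_space ((\<lambda>N. 1/2 + c / real N) N)) {\<omega> \<in> space (path_space ((\<lambda>N. 1/2 + c / real N) N)). m N \<le> int (range_walk N (start_pt \<alpha> N) \<omega>)})
     \<longlonglongrightarrow> FF (Phiw c \<alpha>) (Phiw c (max \<alpha> \<beta>)) (Phiw c (min \<alpha> (1-\<beta>))) (Phiw c 1)"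
  proof (rule tail_limit[where K = "\<lambda>N. 1"])
    show "eventually (\<lambda>N. 1/2 \<le> 1/2 + c / real N \<and> 1/2 + c / real N < 1) sequentially"
      using ev
    proof eventually_elim
      case (elim N)
      have N0: "real N > 0" using elim c by linarith
      have "c / real N < 1/2" using N0 elim by (simp add: divide_less_eq)
      moreover have "c / real N \<ge> 0" using c N0 by simp
      ultimately show ?case by linarith
    qed
    show "(\<lambda>N. phi (1/2 + c / real N) (z N) / 1) \<longlonglongrightarrow> Phiw c \<zeta>"
      if z: "(\<lambda>N. real_of_int (z N) / real N) \<longlonglongrightarrow> \<zeta>" "eventually (\<lambda>N. 0 \<le> z N) sequentially" for z \<zeta>
    proof -
      define r where "r N = (1 - (1/2 + c / real N)) / (1/2 + c / real N)" for N
      have "(\<lambda>N. 1 - exp ((real_of_int (z N) / real N) * (real N * ln (r N)))) \<longlonglongrightarrow> 1 - exp (\<zeta> * (-4*c))"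
        unfolding r_def by (intro tendsto_intros z(1) log_lim c)
      moreover have "eventually (\<lambda>N. 1 - exp ((real_of_int (z N) / real N) * (real N * ln (r N))) = phi (1/2 + c / real N) (z N) / 1) sequentially"
        using ev z(2)
      proof eventually_elim
        case (elim N)
        have N0: "real N > 0" using elim c by linarith
        have cN: "c / real N < 1/2" using N0 elim by (simp add: divide_less_eq)
        have cN0: "c / real N > 0" using N0 c by simp
        have rpos: "r N > 0" unfolding r_def using cN cN0 by (intro divide_pos_pos) linarith+
        have pne: "1/2 + c / real N \<noteq> 1/2" using c N0 by simp
        have "r N ^ nat (z N) = exp (real (nat (z N)) * ln (r N))"
          using rpos by (simp add: powr_realpow[symmetric] powr_def)
        also have "real (nat (z N)) = real_of_int (z N)" using elim by simp
        finally have "r N ^ nat (z N) = exp ((real_of_int (z N) / real N) * (real N * ln (r N)))"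
          using N0 by simp
        thus ?case using pne unfolding phi_def r_def by simp
      qed
      ultimately have "(\<lambda>N. phi (1/2 + c / real N) (z N) / 1) \<longlonglongrightarrow> 1 - exp (\<zeta> * (-4*c))"
        by (rule Lim_transform_eventually)
      thus ?thesis unfolding Phiw_def by (simp add: mult.commute)
    qed
    have "Phiw c (max \<alpha> \<beta>) > 0" unfolding Phiw_def using a c by (simp add: max_def)
    thus "Phiw c (max \<alpha> \<beta>) \<noteq> 0" by simp
    show "Phiw c 1 \<noteq> 0" unfolding Phiw_def using c by simp
    have "min \<alpha> (1-\<beta>) < 1" using a by linarith
    hence "- 4 * c * 1 < - 4 * c * min \<alpha> (1-\<beta>)" using c by simp
    hence "exp (- 4 * c * 1) < exp (- 4 * c * min \<alpha> (1-\<beta>))" by simp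
    thus "Phiw c 1 - Phiw c (min \<alpha> (1 - \<beta>)) \<noteq> 0" unfolding Phiw_def by (simp only: mult_1_right)
  qed (use a m start_pt_props[OF a] in auto)
  thus ?thesis by simp
qed

definition Lf :: "(real \<Rightarrow> real) \<Rightarrow> real \<Rightarrow> real \<Rightarrow> real" where
  "Lf \<Phi> \<alpha> \<beta> = FF (\<Phi> \<alpha>) (\<Phi> (max \<alpha> \<beta>)) (\<Phi> (min \<alpha> (1 - \<beta>))) (\<Phi> 1)"

definition gfun :: "(real \<Rightarrow> real) \<Rightarrow> (real \<Rightarrow> real) \<Rightarrow> real \<Rightarrow> real \<Rightarrow> real" where
  "gfun \<Phi> \<Phi>' \<alpha> \<beta> = (if 0 < \<beta> \<and> \<beta> < 1 then
     (if \<alpha> < \<beta> then \<Phi> \<alpha> * \<Phi>' \<beta> / (\<Phi> \<beta>)\<^sup>2 else 0) +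
     (if 1 - \<beta> < \<alpha> then (\<Phi> 1 - \<Phi> \<alpha>) * \<Phi>' (1 - \<beta>) / (\<Phi> 1 - \<Phi> (1 - \<beta>))\<^sup>2 else 0)
   else 0)"

lemma P1_deriv:
  assumes "B \<noteq> 0" "E \<noteq> 0"
  shows "((\<lambda>b. (E - b) / E * A / b) has_real_derivative (- A / B\<^sup>2)) (at B)"
proof -
  have "((\<lambda>b. (E - b) / E * A / b) has_real_derivative ((0 - 1) / E * A * B - (E - B) / E * A * 1) / (B * B)) (at B)"
    using assms by (intro derivative_eq_intros) auto
  thus ?thesis using assms by (simp add: field_simps power2_eq_square)
qed

lemma P2_deriv:
  assumes "E - C \<noteq> 0" "E \<noteq> 0"
  shows "((\<lambda>c. c / E * (E - A) / (E - c)) has_real_derivative ((E - A) / (E - C)\<^sup>2)) (at C)"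
proof -
  have d: "((\<lambda>c. c / E * (E - A) / (E - c)) has_real_derivative ((1 / E * (E - A)) * (E - C) - C / E * (E - A) * (0 - 1)) / ((E - C) * (E - C))) (at C)"
    using assms by (intro derivative_eq_intros) auto
  define D where "D = E - C"
  have D: "D \<noteq> 0" using assms by (simp add: D_def)
  have "((1 / E * (E - A)) * (E - C) - C / E * (E - A) * (0 - 1)) / ((E - C) * (E - C)) = (E - A) / (E - C)\<^sup>2"
  proof -
    have C: "C = E - D" by (simp add: D_def)
    show ?thesis unfolding C using D assms(2) by (simp add: field_simps power2_eq_square)
  qed
  thus ?thesis using d by simp
qed

lemma L_deriv:
  fixes \<Phi> \<Phi>' :: "real \<Rightarrow> real"
  assumes Phid: "\<And>t. (\<Phi> has_real_derivative \<Phi>' t) (at t)"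
    and b: "0 < \<beta>" "\<beta> < 1" "\<beta> \<noteq> \<alpha>" "\<beta> \<noteq> 1 - \<alpha>"
    and nz: "\<Phi> (max \<alpha> \<beta>) \<noteq> 0" "\<Phi> 1 \<noteq> 0" "\<Phi> 1 - \<Phi> (min \<alpha> (1 - \<beta>)) \<noteq> 0"
  shows "(Lf \<Phi> \<alpha> has_real_derivative - gfun \<Phi> \<Phi>' \<alpha> \<beta>) (at \<beta>)"
proof -
  define A where "A = \<Phi> \<alpha>"
  define E where "E = \<Phi> 1"
  define bb where "bb t = (if \<alpha> < \<beta> then t else \<alpha>)" for t
  define cc where "cc t = (if 1 - \<beta> < \<alpha> then 1 - t else \<alpha>)" for t
  define Db where "Db = (if \<alpha> < \<beta> then \<Phi>' \<beta> else 0)"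
  define Dc where "Dc = (if 1 - \<beta> < \<alpha> then - \<Phi>' (1 - \<beta>) else 0)"
  have dbb: "((\<lambda>t. \<Phi> (bb t)) has_real_derivative Db) (at \<beta>)"
    unfolding bb_def Db_def by (cases "\<alpha> < \<beta>") (auto intro: Phid)
  have dcc: "((\<lambda>t. \<Phi> (cc t)) has_real_derivative Dc) (at \<beta>)"
  proof (cases "1 - \<beta> < \<alpha>")
    case True
    have d1: "((\<lambda>t. 1 - t) has_real_derivative -1) (at \<beta>)"
      by (auto intro!: derivative_eq_intros)
    have "((\<lambda>t. \<Phi> (1 - t)) has_real_derivative \<Phi>' (1 - \<beta>) * (-1)) (at \<beta>)"
      by (rule DERIV_chain2[OF Phid d1])
    thus ?thesis using True unfolding cc_def Dc_def by simp
  qed (simp add: cc_def Dc_def)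
  have bbb: "bb \<beta> = max \<alpha> \<beta>" "cc \<beta> = min \<alpha> (1 - \<beta>)" unfolding bb_def cc_def by auto
  define h where "h t = (E - \<Phi> (bb t)) / E * A / \<Phi> (bb t) + \<Phi> (cc t) / E * (E - A) / (E - \<Phi> (cc t))" for t
  have dh: "(h has_real_derivative (- A / (\<Phi> (bb \<beta>))\<^sup>2) * Db + ((E - A) / (E - \<Phi> (cc \<beta>))\<^sup>2) * Dc) (at \<beta>)"
    unfolding h_def
  proof (rule DERIV_add)
    have d1: "((\<lambda>b. (E - b) / E * A / b) has_real_derivative - A / (\<Phi> (bb \<beta>))\<^sup>2) (at (\<Phi> (bb \<beta>)))"
      by (rule P1_deriv) (use nz bbb in \<open>auto simp: E_def\<close>)
    show "((\<lambda>t. (E - \<Phi> (bb t)) / E * A / \<Phi> (bb t)) has_real_derivative - A / (\<Phi> (bb \<beta>))\<^sup>2 * Db) (at \<beta>)"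
      using DERIV_chain2[OF d1 dbb] by simp
    have d2: "((\<lambda>c. c / E * (E - A) / (E - c)) has_real_derivative (E - A) / (E - \<Phi> (cc \<beta>))\<^sup>2) (at (\<Phi> (cc \<beta>)))"
      by (rule P2_deriv) (use nz bbb in \<open>auto simp: E_def\<close>)
    show "((\<lambda>t. \<Phi> (cc t) / E * (E - A) / (E - \<Phi> (cc t))) has_real_derivative (E - A) / (E - \<Phi> (cc \<beta>))\<^sup>2 * Dc) (at \<beta>)"
      using DERIV_chain2[OF d2 dcc] by simp
  qed
  have deq: "(- A / (\<Phi> (bb \<beta>))\<^sup>2) * Db + ((E - A) / (E - \<Phi> (cc \<beta>))\<^sup>2) * Dc = - gfun \<Phi> \<Phi>' \<alpha> \<beta>"
    unfolding gfun_def Db_def Dc_def bb_def cc_def A_def E_def using b by auto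
  define S where "S = (if \<alpha> < \<beta> then {\<alpha><..} else {..<\<alpha>}) \<inter> (if 1 - \<beta> < \<alpha> then {1 - \<alpha><..} else {..<1 - \<alpha>})"
  have S: "open S" "\<beta> \<in> S" unfolding S_def using b by (auto simp: open_Int)
  have hL: "h t = Lf \<Phi> \<alpha> t" if "t \<in> S" for t
  proof -
    have "bb t = max \<alpha> t" "cc t = min \<alpha> (1 - t)" using that b unfolding S_def bb_def cc_def
      by (auto split: if_splits)
    thus ?thesis unfolding h_def Lf_def FF_def A_def E_def by simp
  qed
  show ?thesis
    using has_field_derivative_transform_within_open[OF dh S hL] deq by simp
qed

lemma Lf_one: "0 < \<alpha> \<Longrightarrow> \<alpha> < 1 \<Longrightarrow> \<Phi> 0 = 0 \<Longrightarrow> Lf \<Phi> \<alpha> 1 = 0"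
  unfolding Lf_def FF_def by (simp add: max_def min_def)

lemma Lf_zero: "0 < \<alpha> \<Longrightarrow> \<alpha> < 1 \<Longrightarrow> \<Phi> 1 \<noteq> 0 \<Longrightarrow> \<Phi> 1 - \<Phi> \<alpha> \<noteq> 0 \<Longrightarrow> \<Phi> \<alpha> \<noteq> 0 \<Longrightarrow> Lf \<Phi> \<alpha> 0 = 1"
proof -
  assume a: "0 < \<alpha>" "\<alpha> < 1" "\<Phi> 1 \<noteq> 0" "\<Phi> 1 - \<Phi> \<alpha> \<noteq> 0" "\<Phi> \<alpha> \<noteq> 0"
  have "Lf \<Phi> \<alpha> 0 = (\<Phi> 1 - \<Phi> \<alpha>) / \<Phi> 1 * (\<Phi> \<alpha> / \<Phi> \<alpha>) + \<Phi> \<alpha> / \<Phi> 1 * ((\<Phi> 1 - \<Phi> \<alpha>) / (\<Phi> 1 - \<Phi> \<alpha>))"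
    unfolding Lf_def FF_def using a by (simp add: max_def min_def)
  also have "\<dots> = (\<Phi> 1 - \<Phi> \<alpha>) / \<Phi> 1 * (\<Phi> \<alpha> / \<Phi> \<alpha>) + \<Phi> \<alpha> / \<Phi> 1" using a by simp
  also have "\<dots> = (\<Phi> 1 - \<Phi> \<alpha>) / \<Phi> 1 + \<Phi> \<alpha> / \<Phi> 1" using a by simp
  also have "\<dots> = 1" using a by (simp add: field_simps)
  finally show ?thesis .
qed

lemma L_integral:
  fixes \<Phi> \<Phi>' d :: "real \<Rightarrow> real"
  assumes Phid: "\<And>t. (\<Phi> has_real_derivative \<Phi>' t) (at t)"
    and Phi0: "\<Phi> 0 = 0" and mono: "\<And>a b. a < b \<Longrightarrow> \<Phi> a < \<Phi> b"
    and a: "0 < \<alpha>" "\<alpha> < 1" and b0: "0 \<le> \<beta>0" "\<beta>0 \<le> 1"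
    and S: "finite S" and d: "\<And>t. t \<in> {\<beta>0<..<1} - S \<Longrightarrow> d t = gfun \<Phi> \<Phi>' \<alpha> t"
  shows "(d has_integral Lf \<Phi> \<alpha> \<beta>0) {\<beta>0..1}"
proof -
  have cPhi: "continuous_on UNIV \<Phi>"
    using Phid by (intro continuous_at_imp_continuous_on) (auto intro: DERIV_isCont)
  have pos1: "\<Phi> 1 > 0" using mono[of 0 1] Phi0 by simp
  have posm: "\<Phi> (max \<alpha> t) > 0" for t using mono[of 0 "max \<alpha> t"] Phi0 a by simp
  have posc: "\<Phi> 1 - \<Phi> (min \<alpha> (1 - t)) > 0" for t using mono[of "min \<alpha> (1 - t)" 1] a by simp
  have cont: "continuous_on {\<beta>0..1} (Lf \<Phi> \<alpha>)"
  proof -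
    have c1: "continuous_on {\<beta>0..1} (\<lambda>t. \<Phi> (max \<alpha> t))"
      by (rule continuous_on_compose2[OF cPhi]) (auto intro!: continuous_intros)
    have c2: "continuous_on {\<beta>0..1} (\<lambda>t. \<Phi> (min \<alpha> (1 - t)))"
      by (rule continuous_on_compose2[OF cPhi]) (auto intro!: continuous_intros)
    show ?thesis unfolding Lf_def FF_def
      using posm posc pos1 by (intro continuous_intros c1 c2) (auto simp: less_imp_neq[symmetric])
  qed
  have "((\<lambda>t. - d t) has_integral (Lf \<Phi> \<alpha> 1 - Lf \<Phi> \<alpha> \<beta>0)) {\<beta>0..1}"
  proof (rule fundamental_theorem_of_calculus_interior_strong[of "S \<union> {\<alpha>, 1 - \<alpha>}"])
    show "finite (S \<union> {\<alpha>, 1 - \<alpha>})" using S by simp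
    show "((Lf \<Phi> \<alpha>) has_vector_derivative - d t) (at t)" if t: "t \<in> {\<beta>0<..<1} - (S \<union> {\<alpha>, 1 - \<alpha>})" for t
    proof -
      have "(Lf \<Phi> \<alpha> has_real_derivative - gfun \<Phi> \<Phi>' \<alpha> t) (at t)"
        using t b0 posm[of t] posc[of t] pos1 by (intro L_deriv[OF Phid]) auto
      moreover have "d t = gfun \<Phi> \<Phi>' \<alpha> t" using t by (intro d) auto
      ultimately show ?thesis by (simp add: has_real_derivative_iff_has_vector_derivative)
    qed
  qed (use b0 cont in auto)
  hence "((\<lambda>t. - d t) has_integral - Lf \<Phi> \<alpha> \<beta>0) {\<beta>0..1}" using Lf_one[of \<alpha> \<Phi>] a Phi0 by simp
  thus ?thesis by (simp add: has_integral_neg_iff)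
qed

lemma density_facts:
  fixes d T :: "real \<Rightarrow> real"
  assumes meas: "d \<in> borel_measurable borel" and nonneg: "\<And>t. d t \<ge> 0"
    and zero: "\<And>t. t < 0 \<or> t > 1 \<Longrightarrow> d t = 0"
    and int: "\<And>\<beta>0. 0 \<le> \<beta>0 \<Longrightarrow> \<beta>0 \<le> 1 \<Longrightarrow> (d has_integral T \<beta>0) {\<beta>0..1}"
    and T0: "T 0 = 1"
  shows "real_distribution (density lborel d)"
    and "\<And>\<beta>0. 0 \<le> \<beta>0 \<Longrightarrow> \<beta>0 \<le> 1 \<Longrightarrow> measure (density lborel d) {\<beta>0..} = T \<beta>0"
    and "\<And>\<beta>0. 1 < \<beta>0 \<Longrightarrow> measure (density lborel d) {\<beta>0..} = 0"
    and "\<And>t. measure (density lborel d) {t} = 0"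
    and "absolutely_continuous lborel (density lborel d)"
proof -
  have Tnn: "T \<beta>0 \<ge> 0" if "0 \<le> \<beta>0" "\<beta>0 \<le> 1" for \<beta>0
    using has_integral_nonneg[OF int[OF that] nonneg] by simp
  have em: "emeasure (density lborel d) {\<beta>0..} = ennreal (T \<beta>0)" if b: "0 \<le> \<beta>0" "\<beta>0 \<le> 1" for \<beta>0
  proof -
    have "emeasure (density lborel d) {\<beta>0..} = (\<integral>\<^sup>+x. ennreal (d x) * indicator {\<beta>0..} x \<partial>lborel)"
      using meas by (subst emeasure_density) auto
    also have "\<dots> = (\<integral>\<^sup>+x. ennreal (indicator {\<beta>0..1} x * d x) \<partial>lborel)"
      by (intro nn_integral_cong) (auto split: split_indicator simp: zero)
    also have "\<dots> = ennreal (T \<beta>0)"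
      using nn_integral_has_integral_lebesgue[OF nonneg int[OF b]] .
    finally show ?thesis .
  qed
  have emU: "emeasure (density lborel d) UNIV = 1"
  proof -
    have "emeasure (density lborel d) UNIV = (\<integral>\<^sup>+x. ennreal (d x) * indicator UNIV x \<partial>lborel)"
      using meas by (subst emeasure_density) auto
    also have "\<dots> = (\<integral>\<^sup>+x. ennreal (d x) * indicator {0..} x \<partial>lborel)"
      by (intro nn_integral_cong) (auto split: split_indicator simp: zero)
    also have "\<dots> = emeasure (density lborel d) {0..}"
      using meas by (subst emeasure_density) auto
    also have "\<dots> = 1" using em[of 0] T0 by simp
    finally show ?thesis .
  qed
  have ps: "prob_space (density lborel d)" by (rule prob_spaceI) (use emU in simp)
  then interpret G: prob_space "density lborel d" .
  show "real_distribution (density lborel d)"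
    unfolding real_distribution_def real_distribution_axioms_def using ps by simp
  show "measure (density lborel d) {\<beta>0..} = T \<beta>0" if "0 \<le> \<beta>0" "\<beta>0 \<le> 1" for \<beta>0
    using em[OF that] Tnn[OF that] by (simp add: G.emeasure_eq_measure)
  show "measure (density lborel d) {\<beta>0..} = 0" if "1 < \<beta>0" for \<beta>0
  proof -
    have "emeasure (density lborel d) {\<beta>0..} = (\<integral>\<^sup>+x. ennreal (d x) * indicator {\<beta>0..} x \<partial>lborel)"
      using meas by (subst emeasure_density) auto
    also have "\<dots> = (\<integral>\<^sup>+(x::real). 0 \<partial>lborel)"
      using that by (intro nn_integral_cong) (auto split: split_indicator simp: zero)
    finally show ?thesis by (simp add: G.emeasure_eq_measure)
  qed
  show ac: "absolutely_continuous lborel (density lborel d)"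
    using meas by (intro absolutely_continuousI_density) simp
  show "measure (density lborel d) {t} = 0" for t
  proof -
    have "{t} \<in> null_sets lborel" by (simp add: null_sets_def)
    hence "{t} \<in> null_sets (density lborel d)" using ac unfolding absolutely_continuous_def by auto
    thus ?thesis by (simp add: measure_def null_sets_def)
  qed
qed

lemma Lf_cases:
  assumes "\<Phi> 1 \<noteq> 0" "\<Phi> 1 - \<Phi> \<alpha> \<noteq> 0" "\<Phi> \<alpha> \<noteq> 0"
  shows "\<beta> \<le> \<alpha> \<Longrightarrow> \<alpha> \<le> 1 - \<beta> \<Longrightarrow> Lf \<Phi> \<alpha> \<beta> = 1"
    and "\<alpha> < \<beta> \<Longrightarrow> \<alpha> \<le> 1 - \<beta> \<Longrightarrow> \<Phi> \<beta> \<noteq> 0 \<Longrightarrow> Lf \<Phi> \<alpha> \<beta> = \<Phi> \<alpha> / \<Phi> \<beta>"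
    and "\<beta> \<le> \<alpha> \<Longrightarrow> 1 - \<beta> < \<alpha> \<Longrightarrow> \<Phi> 1 - \<Phi> (1 - \<beta>) \<noteq> 0 \<Longrightarrow>
         Lf \<Phi> \<alpha> \<beta> = (\<Phi> 1 - \<Phi> \<alpha>) / (\<Phi> 1 - \<Phi> (1 - \<beta>))"
    and "\<alpha> < \<beta> \<Longrightarrow> 1 - \<beta> < \<alpha> \<Longrightarrow> Lf \<Phi> \<alpha> \<beta> = FF (\<Phi> \<alpha>) (\<Phi> \<beta>) (\<Phi> (1 - \<beta>)) (\<Phi> 1)"
proof -
  define A E where "A = \<Phi> \<alpha>" and "E = \<Phi> 1"
  have AE: "A \<noteq> 0" "E \<noteq> 0" "E - A \<noteq> 0" using assms by (auto simp: A_def E_def)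
  show "Lf \<Phi> \<alpha> \<beta> = 1" if "\<beta> \<le> \<alpha>" "\<alpha> \<le> 1 - \<beta>"
  proof -
    have "Lf \<Phi> \<alpha> \<beta> = (E - A) / E * A / A + A / E * (E - A) / (E - A)"
      unfolding Lf_def FF_def A_def E_def using that by (simp add: max_def min_def)
    also have "\<dots> = (E - A) / E + A / E" using AE by simp
    also have "\<dots> = 1" using AE by (simp add: field_simps)
    finally show ?thesis .
  qed
  show "Lf \<Phi> \<alpha> \<beta> = \<Phi> \<alpha> / \<Phi> \<beta>" if "\<alpha> < \<beta>" "\<alpha> \<le> 1 - \<beta>" "\<Phi> \<beta> \<noteq> 0"
  proof -
    define B where "B = \<Phi> \<beta>"
    have "Lf \<Phi> \<alpha> \<beta> = (E - B) / E * A / B + A / E * (E - A) / (E - A)"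
      unfolding Lf_def FF_def A_def E_def B_def using that by (simp add: max_def min_def)
    also have "\<dots> = (E - B) / E * A / B + A / E" using AE by simp
    also have "\<dots> = A / B" using AE that by (simp add: B_def field_simps)
    finally show ?thesis by (simp add: A_def B_def)
  qed
  show "Lf \<Phi> \<alpha> \<beta> = (\<Phi> 1 - \<Phi> \<alpha>) / (\<Phi> 1 - \<Phi> (1 - \<beta>))" if "\<beta> \<le> \<alpha>" "1 - \<beta> < \<alpha>" "\<Phi> 1 - \<Phi> (1 - \<beta>) \<noteq> 0"
  proof -
    define C where "C = \<Phi> (1 - \<beta>)"
    define D where "D = E - C"
    have D: "D \<noteq> 0" using that by (simp add: D_def C_def E_def)
    have C: "C = E - D" by (simp add: D_def)
    have "Lf \<Phi> \<alpha> \<beta> = (E - A) / E * A / A + C / E * (E - A) / (E - C)"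
      unfolding Lf_def FF_def A_def E_def C_def using that by (simp add: max_def min_def)
    also have "\<dots> = (E - A) / E + C / E * (E - A) / (E - C)" using AE by simp
    also have "\<dots> = (E - A) / (E - C)" unfolding C using AE D by (simp add: field_simps)
    finally show ?thesis by (simp add: A_def C_def E_def)
  qed
  show "Lf \<Phi> \<alpha> \<beta> = FF (\<Phi> \<alpha>) (\<Phi> \<beta>) (\<Phi> (1 - \<beta>)) (\<Phi> 1)" if "\<alpha> < \<beta>" "1 - \<beta> < \<alpha>"
    unfolding Lf_def using that by (simp add: max_def min_def)
qed

lemma sym_eq:
  assumes a: "0 < \<alpha>" "\<alpha> < 1" and b: "0 \<le> \<beta>" "\<beta> \<le> 1"
  shows "Lf id \<alpha> \<beta> = tail_sym \<alpha> \<beta>"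
proof -
  have nz: "id 1 \<noteq> (0::real)" "id 1 - id \<alpha> \<noteq> 0" "id \<alpha> \<noteq> 0" using a by auto
  consider "\<beta> \<le> \<alpha>" "\<alpha> \<le> 1 - \<beta>" | "\<alpha> < \<beta>" "\<alpha> \<le> 1 - \<beta>" | "\<beta> \<le> \<alpha>" "1 - \<beta> < \<alpha>" | "\<alpha> < \<beta>" "1 - \<beta> < \<alpha>"
    by linarith
  thus ?thesis
  proof cases
    case 1
    have "Lf id \<alpha> \<beta> = 1" by (rule Lf_cases(1)[OF nz 1])
    thus ?thesis using 1 unfolding tail_sym_def Let_def by auto
  next
    case 2
    have "Lf id \<alpha> \<beta> = id \<alpha> / id \<beta>" by (rule Lf_cases(2)[OF nz 2]) (use 2 a in auto)
    hence "Lf id \<alpha> \<beta> = \<alpha> / \<beta>" by simp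
    thus ?thesis using 2 a unfolding tail_sym_def Let_def by (auto simp: min_def max_def)
  next
    case 3
    have "Lf id \<alpha> \<beta> = (id 1 - id \<alpha>) / (id 1 - id (1 - \<beta>))" by (rule Lf_cases(3)[OF nz 3]) (use 3 a in auto)
    hence "Lf id \<alpha> \<beta> = (1 - \<alpha>) / \<beta>" by simp
    thus ?thesis using 3 a b unfolding tail_sym_def Let_def by (auto simp: min_def max_def)
  next
    case 4
    have "Lf id \<alpha> \<beta> = FF (id \<alpha>) (id \<beta>) (id (1 - \<beta>)) (id 1)" by (rule Lf_cases(4)[OF nz 4])
    also have "\<dots> = FF \<alpha> \<beta> (1 - \<beta>) 1" by simp
    also have "\<dots> = (1 - \<beta>) / \<beta>" unfolding FF_def using 4 a b by (simp add: field_simps)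
    finally show ?thesis using 4 a b unfolding tail_sym_def Let_def by (auto simp: min_def max_def)
  qed
qed

lemma id3:
  fixes u v w :: real
  assumes "w > 0" "v > 0" "v \<noteq> 1"
  shows "(u - w) / (w / v - w) = (1 - u / w) / (1 - 1 / v)"
proof -
  have "w / v - w = w * (1 - v) / v" using assms by (simp add: field_simps)
  moreover have "1 - u / w = (w - u) / w" using assms by (simp add: field_simps)
  moreover have "1 - 1 / v = (v - 1) / v" using assms by (simp add: field_simps)
  moreover have "1 - v \<noteq> 0" "v - 1 \<noteq> 0" using assms by auto
  ultimately show ?thesis using assms by (simp add: field_simps)
qed

lemma T2a:
  fixes u v w :: real
  assumes nzv: "v \<noteq> 0" "w \<noteq> 0" "1 - v \<noteq> 0" "1 - w \<noteq> 0"
  shows "(1 - w / v) / (1 - w) * (u - w) / (w * (1 - v) / v) = (v - w) * (u - w) / ((1 - w) * (1 - v) * w)"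
proof -
  define a b where "a = 1 - v" and "b = 1 - w"
  have ab: "a \<noteq> 0" "b \<noteq> 0" using nzv by (auto simp: a_def b_def)
  have "1 - w / v = (v - w) / v" using nzv by (simp add: field_simps)
  hence "(1 - w / v) / (1 - w) * (u - w) / (w * (1 - v) / v) = (v - w) / v / b * (u - w) / (w * a / v)"
    by (simp add: a_def b_def)
  also have "\<dots> = (v - w) * (u - w) / (b * a * w)" using ab nzv by (simp add: field_simps)
  finally show ?thesis by (simp add: a_def b_def)
qed

lemma T3a:
  fixes u v w :: real
  assumes nzv: "v \<noteq> 0" "w \<noteq> 0" "1 - v \<noteq> 0" "1 - w \<noteq> 0"
  shows "(v - w) / (1 - w) * (1 - u) / (1 - v) + (v - w) * (u - w) / ((1 - w) * (1 - v) * w) = u * (v - w) / (w * (1 - v))"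
proof -
  define a b where "a = 1 - v" and "b = 1 - w"
  have ab: "a \<noteq> 0" "b \<noteq> 0" using nzv by (auto simp: a_def b_def)
  have "(v - w) / b * (1 - u) / a + (v - w) * (u - w) / (b * a * w) = ((v - w) * (1 - u) * w + (v - w) * (u - w)) / (b * a * w)"
    using ab nzv by (simp add: field_simps)
  also have "(v - w) * (1 - u) * w + (v - w) * (u - w) = u * (v - w) * b" by (simp add: b_def algebra_simps)
  also have "u * (v - w) * b / (b * a * w) = u * (v - w) / (w * a)" using ab nzv by (simp add: field_simps)
  finally show ?thesis by (simp add: a_def b_def)
qed
lemma id4:
  fixes u v w :: real
  assumes "w > 0" "v > 0" "v \<noteq> 1" "w \<noteq> 1"
  shows "FF (1 - u) (1 - v) (1 - w / v) (1 - w) = u * (v / w - 1) / (1 - v)"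
proof -
  have nzv: "v \<noteq> 0" "w \<noteq> 0" "1 - v \<noteq> 0" "1 - w \<noteq> 0" using assms by auto
  have a: "1 - w - (1 - v) = v - w" "1 - w - (1 - u) = u - w" "1 - w - (1 - w / v) = w * (1 - v) / v"
    using assms by (auto simp: field_simps)
  have T2: "(1 - w / v) / (1 - w) * (u - w) / (w * (1 - v) / v) = (v - w) * (u - w) / ((1 - w) * (1 - v) * w)"
    by (rule T2a[OF nzv])
  have T3: "(v - w) / (1 - w) * (1 - u) / (1 - v) + (v - w) * (u - w) / ((1 - w) * (1 - v) * w) = u * (v - w) / (w * (1 - v))"
    by (rule T3a[OF nzv])
  have T4: "u * (v / w - 1) / (1 - v) = u * (v - w) / (w * (1 - v))"
    using nzv by (simp add: field_simps)
  show ?thesis unfolding FF_def a using T2 T3 T4 by simp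
qed

lemma weak_eq:
  assumes a: "0 < \<alpha>" "\<alpha> < 1" and c: "c > 0" and b: "0 \<le> \<beta>" "\<beta> \<le> 1"
  shows "Lf (Phiw c) \<alpha> \<beta> = tail_weak c \<alpha> \<beta>"
proof -
  define u v w where "u = exp (-4*c*\<alpha>)" and "v = exp (-4*c*\<beta>)" and "w = exp (-4*c)"
  have mono: "Phiw c s < Phiw c t" if "s < t" for s t unfolding Phiw_def using that c by simp
  have P0: "Phiw c 0 = 0" by (simp add: Phiw_def)
  have pos: "Phiw c t > 0" if "t > 0" for t using mono[OF that] P0 by simp
  have nz: "Phiw c 1 \<noteq> 0" "Phiw c 1 - Phiw c \<alpha> \<noteq> 0" "Phiw c \<alpha> \<noteq> 0"
    using pos[of 1] pos[of \<alpha>] mono[of \<alpha> 1] a by auto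
  have uvw: "w > 0" "v > 0" "w \<noteq> 1" unfolding u_def v_def w_def using c by auto
  have e1: "exp (-4*c*(1-\<beta>)) = w / v" unfolding v_def w_def by (simp add: exp_diff[symmetric] algebra_simps)
  have e2: "exp (4*c*(1-\<alpha>)) = u / w" unfolding u_def w_def by (simp add: exp_diff[symmetric] algebra_simps)
  have e3: "exp (4*c*\<beta>) = 1 / v" unfolding v_def by (simp add: exp_minus inverse_eq_divide)
  have e4: "exp (4*c*(1-\<beta>)) = v / w" unfolding v_def w_def by (simp add: exp_diff[symmetric] algebra_simps)
  have P1b: "Phiw c (1 - \<beta>) = 1 - w / v" unfolding Phiw_def using e1 by (simp add: algebra_simps)
  consider "\<beta> \<le> \<alpha>" "\<alpha> \<le> 1 - \<beta>" | "\<alpha> < \<beta>" "\<alpha> \<le> 1 - \<beta>" | "\<beta> \<le> \<alpha>" "1 - \<beta> < \<alpha>" | "\<alpha> < \<beta>" "1 - \<beta> < \<alpha>"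
    by linarith
  thus ?thesis
  proof cases
    case 1
    have "Lf (Phiw c) \<alpha> \<beta> = 1" by (rule Lf_cases(1)[OF nz 1])
    thus ?thesis using 1 unfolding tail_weak_def Let_def by auto
  next
    case 2
    have "Lf (Phiw c) \<alpha> \<beta> = Phiw c \<alpha> / Phiw c \<beta>" by (rule Lf_cases(2)[OF nz 2]) (use pos[of \<beta>] 2 a in auto)
    thus ?thesis using 2 a unfolding tail_weak_def Let_def Phiw_def by (auto simp: min_def max_def)
  next
    case 3
    have bpos: "\<beta> > 0" using 3 a by linarith
    have v1: "v \<noteq> 1" unfolding v_def using bpos c by simp
    have "Lf (Phiw c) \<alpha> \<beta> = (Phiw c 1 - Phiw c \<alpha>) / (Phiw c 1 - Phiw c (1 - \<beta>))"
      by (rule Lf_cases(3)[OF nz 3]) (use mono[of "1 - \<beta>" 1] bpos in auto)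
    also have "\<dots> = (u - w) / (w / v - w)" unfolding P1b unfolding Phiw_def u_def w_def by simp
    also have "\<dots> = (1 - u / w) / (1 - 1 / v)" by (rule id3[OF uvw(1,2) v1])
    also have "\<dots> = (1 - exp (4*c*(1-\<alpha>))) / (1 - exp (4*c*\<beta>))" unfolding e2 e3 ..
    finally show ?thesis using 3 a unfolding tail_weak_def Let_def by (auto simp: min_def max_def)
  next
    case 4
    have bpos: "\<beta> > 0" using 4 a by linarith
    have v1: "v \<noteq> 1" unfolding v_def using bpos c by simp
    have "Lf (Phiw c) \<alpha> \<beta> = FF (Phiw c \<alpha>) (Phiw c \<beta>) (Phiw c (1 - \<beta>)) (Phiw c 1)"
      by (rule Lf_cases(4)[OF nz 4])
    also have "\<dots> = FF (1 - u) (1 - v) (1 - w / v) (1 - w)" unfolding P1b unfolding Phiw_def u_def v_def w_def by simp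
    also have "\<dots> = u * (v / w - 1) / (1 - v)" by (rule id4[OF uvw(1,2) v1 uvw(3)])
    also have "\<dots> = exp (-4*c*\<alpha>) * (exp (4*c*(1 - \<beta>)) - 1) / (1 - exp (-4*c*\<beta>))" unfolding e4 u_def v_def ..
    finally show ?thesis using 4 a b unfolding tail_weak_def Let_def by (auto simp: min_def max_def)
  qed
qed

lemma range_le: "range_walk N x \<omega> \<le> N + 1"
proof -
  have "range_walk N x \<omega> \<le> card {0..int N}" unfolding range_walk_def by (intro card_mono) auto
  thus ?thesis by simp
qed

lemma range_meas:
  assumes x: "0 < x" "x < N"
  shows "range_walk N x \<in> path_space p \<rightarrow>\<^sub>M count_space UNIV"
proof -
  have "range_walk N x -` {n} \<inter> space (path_space p) \<in> sets (path_space p)" for n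
  proof -
    have "range_walk N x -` {n} \<inter> space (path_space p) =
      {\<omega> \<in> space (path_space p). int n \<le> int (range_walk N x \<omega>)} - {\<omega> \<in> space (path_space p). int n + 1 \<le> int (range_walk N x \<omega>)}"
      by auto
    thus ?thesis by (simp only:) (intro sets.Diff range_sets[OF x])
  qed
  thus ?thesis by (subst measurable_count_space_eq_countable) auto
qed

lemma f_meas:
  assumes x: "0 < x" "x < N"
  shows "(\<lambda>\<omega>. real (range_walk N x \<omega>) / real N) \<in> borel_measurable (path_space p)"
proof -
  have "(\<lambda>n::nat. real n / real N) \<in> count_space UNIV \<rightarrow>\<^sub>M borel" by simp
  thus ?thesis by (rule measurable_compose[OF range_meas[OF x]])
qed

lemma final_generic:
  fixes p :: "nat \<Rightarrow> real" and x :: "nat \<Rightarrow> nat" and T :: "real \<Rightarrow> real" and G :: "real measure"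
  assumes p: "eventually (\<lambda>N. 1/2 \<le> p N \<and> p N < 1) sequentially"
    and x: "eventually (\<lambda>N. 0 < x N \<and> x N < N) sequentially"
    and lim: "\<And>m \<beta>. (\<lambda>N. real_of_int (m N) / real N) \<longlonglongrightarrow> \<beta> \<Longrightarrow> eventually (\<lambda>N. m N \<le> int N) sequentially \<Longrightarrow>
       0 \<le> \<beta> \<Longrightarrow> \<beta> \<le> 1 \<Longrightarrow>
       (\<lambda>N. measure (path_space (p N)) {\<omega> \<in> space (path_space (p N)). m N \<le> int (range_walk N (x N) \<omega>)}) \<longlonglongrightarrow> T \<beta>"
    and T1: "\<And>\<beta>. 1 \<le> \<beta> \<Longrightarrow> T \<beta> = 0" and T0: "T 0 = 1"
    and G: "prob_space G" "sets G = sets borel" "\<And>t. 0 \<le> t \<Longrightarrow> measure G {t..} = T t" "\<And>t. measure G {t} = 0"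
  shows "(\<forall>\<beta>\<ge>0. (\<lambda>N. range_tail (p N) N (x N) \<beta>) \<longlonglongrightarrow> T \<beta>)"
    and "weak_conv_m (\<lambda>N. range_law (p N) N (x N)) G"
proof -
  interpret G: prob_space G by (rule G(1))
  have Npos: "eventually (\<lambda>N. real N > 0) sequentially" using eventually_gt_at_top[of 0] by eventually_elim simp
  show "\<forall>\<beta>\<ge>0. (\<lambda>N. range_tail (p N) N (x N) \<beta>) \<longlonglongrightarrow> T \<beta>"
  proof (intro allI impI)
    fix \<beta> :: real assume b: "0 \<le> \<beta>"
    have eq: "eventually (\<lambda>N. measure (path_space (p N)) {\<omega> \<in> space (path_space (p N)). \<lceil>\<beta> * real N\<rceil> \<le> int (range_walk N (x N) \<omega>)}
        = range_tail (p N) N (x N) \<beta>) sequentially"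
      using Npos
    proof eventually_elim
      case (elim N)
      have "(\<lceil>\<beta> * real N\<rceil> \<le> int (range_walk N (x N) \<omega>)) = (\<beta> \<le> real (range_walk N (x N) \<omega>) / real N)" for \<omega>
        using elim by (simp add: ceiling_le_iff field_simps)
      thus ?case unfolding range_tail_def by simp
    qed
    show "(\<lambda>N. range_tail (p N) N (x N) \<beta>) \<longlonglongrightarrow> T \<beta>"
    proof (cases "\<beta> \<le> 1")
      case True
      have "(\<lambda>N. measure (path_space (p N)) {\<omega> \<in> space (path_space (p N)). \<lceil>\<beta> * real N\<rceil> \<le> int (range_walk N (x N) \<omega>)}) \<longlonglongrightarrow> T \<beta>"
      proof (rule lim[OF ceiling_ratio _ b True])
        show "eventually (\<lambda>N. \<lceil>\<beta> * real N\<rceil> \<le> int N) sequentially"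
          using True b by (intro always_eventually allI) (simp add: ceiling_le_iff mult_left_le_one_le)
      qed
      thus ?thesis using eq by (rule Lim_transform_eventually)
    next
      case False
      have "eventually (\<lambda>N. range_tail (p N) N (x N) \<beta> = 0) sequentially"
        using eventually_ge_at_top[of "nat \<lceil>2 / (\<beta> - 1)\<rceil> + 1"]
      proof eventually_elim
        case (elim N)
        have "real N \<ge> 2 / (\<beta> - 1)" using elim by linarith
        hence "real N * (\<beta> - 1) \<ge> 2" using False by (simp add: field_simps)
        hence Nb: "\<beta> * real N > real N + 1" by (simp add: algebra_simps)
        have N0: "real N > 0" using elim by simp
        have "\<not> \<beta> \<le> real (range_walk N (x N) \<omega>) / real N" for \<omega>
        proof
          assume "\<beta> \<le> real (range_walk N (x N) \<omega>) / real N"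
          hence "\<beta> * real N \<le> real (range_walk N (x N) \<omega>)" using N0 by (simp add: field_simps)
          moreover have "real (range_walk N (x N) \<omega>) \<le> real N + 1" using range_le[of N "x N" \<omega>] by simp
          ultimately show False using Nb by simp
        qed
        thus ?case unfolding range_tail_def by simp
      qed
      moreover have "T \<beta> = 0" using False T1 by simp
      ultimately show ?thesis by (simp add: tendsto_eventually)
    qed
  qed
  have spG: "space G = UNIV" using sets_eq_imp_space_eq[OF G(2)] by simp
  have sG: "A \<in> sets G" if "A \<in> sets borel" for A using that G(2) by simp
  have gt: "measure G {t<..} = T t" if "0 \<le> t" for t
  proof -
    have "measure G ({t} \<union> {t<..}) = measure G {t} + measure G {t<..}"
      by (intro G.finite_measure_Union sG) auto
    moreover have "{t} \<union> {t<..} = {t..}" by auto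
    ultimately show ?thesis using G(3)[OF that] G(4)[of t] by simp
  qed
  have cdfG: "cdf G t = (if t < 0 then 0 else 1 - T t)" for t
  proof (cases "t < 0")
    case False
    have "measure G (space G - {t<..}) = 1 - measure G {t<..}" by (intro G.prob_compl sG) auto
    moreover have "space G - {t<..} = {..t}" using spG by auto
    ultimately show ?thesis using False gt[of t] unfolding cdf_def by simp
  next
    case True
    have "measure G (space G - {0<..}) = 1 - measure G {0<..}" by (intro G.prob_compl sG) auto
    moreover have "space G - {0<..} = {..0}" using spG by auto
    ultimately have "measure G {..0} = 0" using gt[of 0] T0 by simp
    moreover have "measure G {..t} \<le> measure G {..0}" using True by (intro G.finite_measure_mono sG) auto
    ultimately have "measure G {..t} = 0" using measure_nonneg[of G "{..t}"] by linarith
    thus ?thesis using True unfolding cdf_def by simp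
  qed
  define Q where "Q N t = measure (path_space (p N)) {\<omega> \<in> space (path_space (p N)). \<lfloor>t * real N\<rfloor> + 1 \<le> int (range_walk N (x N) \<omega>)}" for N t
  have cdfQ: "eventually (\<lambda>N. cdf (range_law (p N) N (x N)) t = 1 - Q N t) sequentially" for t
    using x Npos
  proof eventually_elim
    case (elim N)
    interpret S: prob_space "path_space (p N)" by (rule prob_space_path)
    have fm: "(\<lambda>\<omega>. real (range_walk N (x N) \<omega>) / real N) \<in> borel_measurable (path_space (p N))"
      using elim by (intro f_meas) auto
    have "cdf (range_law (p N) N (x N)) t = measure (path_space (p N))
       ((\<lambda>\<omega>. real (range_walk N (x N) \<omega>) / real N) -` {..t} \<inter> space (path_space (p N)))"
      unfolding cdf_def range_law_def using fm by (subst measure_distr) auto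
    also have "(\<lambda>\<omega>. real (range_walk N (x N) \<omega>) / real N) -` {..t} \<inter> space (path_space (p N)) =
       space (path_space (p N)) - {\<omega> \<in> space (path_space (p N)). \<lfloor>t * real N\<rfloor> + 1 \<le> int (range_walk N (x N) \<omega>)}"
    proof -
      have "(real (range_walk N (x N) \<omega>) / real N \<le> t) = (\<not> \<lfloor>t * real N\<rfloor> + 1 \<le> int (range_walk N (x N) \<omega>))" for \<omega>
      proof -
        have "(real (range_walk N (x N) \<omega>) / real N \<le> t) = (real (range_walk N (x N) \<omega>) \<le> t * real N)"
          using elim by (simp add: divide_le_eq)
        also have "\<dots> = (int (range_walk N (x N) \<omega>) \<le> \<lfloor>t * real N\<rfloor>)" by (simp add: le_floor_iff)
        finally show ?thesis by linarith
      qed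
      thus ?thesis by auto
    qed
    also have "measure (path_space (p N)) (space (path_space (p N)) - {\<omega> \<in> space (path_space (p N)). \<lfloor>t * real N\<rfloor> + 1 \<le> int (range_walk N (x N) \<omega>)})
       = 1 - Q N t" unfolding Q_def using elim by (intro S.prob_compl range_sets) auto
    finally show ?case .
  qed
  have Qlim: "(\<lambda>N. Q N t) \<longlonglongrightarrow> (if t < 0 then 1 else T t)" for t
  proof (cases "t < 0")
    case True
    have "eventually (\<lambda>N. Q N t = 1) sequentially" using Npos
    proof eventually_elim
      case (elim N)
      interpret S: prob_space "path_space (p N)" by (rule prob_space_path)
      have "t * real N < 0" using True elim by (simp add: mult_neg_pos)
      hence "\<lfloor>t * real N\<rfloor> + 1 \<le> 0" by linarith
      hence "{\<omega> \<in> space (path_space (p N)). \<lfloor>t * real N\<rfloor> + 1 \<le> int (range_walk N (x N) \<omega>)} = space (path_space (p N))"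
        by auto
      thus ?case unfolding Q_def by (simp add: S.prob_space)
    qed
    thus ?thesis using True by (simp add: tendsto_eventually)
  next
    case False
    show ?thesis
    proof (cases "t < 1")
      case True
      have "(\<lambda>N. Q N t) \<longlonglongrightarrow> T t" unfolding Q_def
      proof (rule lim[OF floor1_ratio])
        show "eventually (\<lambda>N. \<lfloor>t * real N\<rfloor> + 1 \<le> int N) sequentially"
          using eventually_ge_at_top[of "nat \<lceil>1 / (1 - t)\<rceil>"]
        proof eventually_elim
          case (elim N)
          have "real N \<ge> 1 / (1 - t)" using elim by linarith
          hence "real N * (1 - t) \<ge> 1" using True by (simp add: field_simps)
          hence "t * real N \<le> real N - 1" by (simp add: algebra_simps)
          thus ?case by linarith
        qed
      qed (use False True in auto)
      thus ?thesis using False by simp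
    next
      case t1: False
      have lim1: "(\<lambda>N. measure (path_space (p N)) {\<omega> \<in> space (path_space (p N)). int N \<le> int (range_walk N (x N) \<omega>)}) \<longlonglongrightarrow> T 1"
      proof (rule lim)
        show "(\<lambda>N. real_of_int (int N) / real N) \<longlonglongrightarrow> 1"
          by (rule Lim_transform_eventually[OF tendsto_const]) (use Npos in \<open>eventually_elim, simp\<close>)
      qed auto
      have "(\<lambda>N. Q N t) \<longlonglongrightarrow> 0"
      proof (rule tendsto_sandwich[OF _ _ tendsto_const])
        show "eventually (\<lambda>N. 0 \<le> Q N t) sequentially" unfolding Q_def by simp
        show "eventually (\<lambda>N. Q N t \<le> measure (path_space (p N)) {\<omega> \<in> space (path_space (p N)). int N \<le> int (range_walk N (x N) \<omega>)}) sequentially"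
          using x
        proof eventually_elim
          case (elim N)
          interpret S: prob_space "path_space (p N)" by (rule prob_space_path)
          have "t * real N \<ge> real N" using t1 by (simp add: mult_le_cancel_right1)
          hence "\<lfloor>t * real N\<rfloor> \<ge> int N" by linarith
          hence "{\<omega> \<in> space (path_space (p N)). \<lfloor>t * real N\<rfloor> + 1 \<le> int (range_walk N (x N) \<omega>)} \<subseteq>
             {\<omega> \<in> space (path_space (p N)). int N \<le> int (range_walk N (x N) \<omega>)}" by auto
          thus ?case unfolding Q_def using elim by (intro S.finite_measure_mono range_sets) auto
        qed
        show "(\<lambda>N. measure (path_space (p N)) {\<omega> \<in> space (path_space (p N)). int N \<le> int (range_walk N (x N) \<omega>)}) \<longlonglongrightarrow> 0"
          using lim1 T1[of 1] by simp
      qed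
      thus ?thesis using False t1 T1[of t] by simp
    qed
  qed
  show "weak_conv_m (\<lambda>N. range_law (p N) N (x N)) G"
    unfolding weak_conv_m_def weak_conv_def
  proof (intro allI impI)
    fix t :: real
    have "(\<lambda>N. 1 - Q N t) \<longlonglongrightarrow> 1 - (if t < 0 then 1 else T t)" by (intro tendsto_intros Qlim)
    hence "(\<lambda>N. cdf (range_law (p N) N (x N)) t) \<longlonglongrightarrow> 1 - (if t < 0 then 1 else T t)"
      by (rule Lim_transform_eventually) (use cdfQ[of t] in \<open>eventually_elim, simp\<close>)
    moreover have "1 - (if t < 0 then 1 else T t) = cdf G t" unfolding cdfG by simp
    ultimately show "(\<lambda>N. cdf (range_law (p N) N (x N)) t) \<longlonglongrightarrow> cdf G t" by simp
  qed
qed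

definition Phiw' :: "real \<Rightarrow> real \<Rightarrow> real" where "Phiw' c t = 4 * c * exp (- 4 * c * t)"

lemma dens_sym_eq:
  assumes a: "0 < \<alpha>" "\<alpha> < 1" and t: "0 < t" "t < 1" "t \<noteq> \<alpha>" "t \<noteq> 1 - \<alpha>"
  shows "dens_sym \<alpha> t = gfun id (\<lambda>_. 1) \<alpha> t"
proof -
  have e: "(1 - (1 - t)) = t" by simp
  consider "t < \<alpha>" "t < 1 - \<alpha>" | "\<alpha> < t" "t < 1 - \<alpha>" | "t < \<alpha>" "1 - \<alpha> < t" | "\<alpha> < t" "1 - \<alpha> < t"
    using t by linarith
  thus ?thesis
  proof cases
    case 1 thus ?thesis using a t unfolding dens_sym_def gfun_def Let_def by (auto simp: min_def max_def)
  next
    case 2 thus ?thesis using a t unfolding dens_sym_def gfun_def Let_def by (auto simp: min_def max_def)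
  next
    case 3 thus ?thesis using a t unfolding dens_sym_def gfun_def Let_def by (auto simp: min_def max_def)
  next
    case 4
    have "gfun id (\<lambda>_. 1) \<alpha> t = \<alpha> / t\<^sup>2 + (1 - \<alpha>) / t\<^sup>2" using 4 t unfolding gfun_def by simp
    also have "\<dots> = 1 / t\<^sup>2" by (simp add: add_divide_distrib[symmetric])
    finally show ?thesis using 4 a t unfolding dens_sym_def Let_def by (auto simp: min_def max_def)
  qed
qed

lemma sym_density:
  assumes a: "0 < \<alpha>" "\<alpha> < 1"
  shows "real_distribution (density lborel (dens_sym \<alpha>))"
    and "\<And>\<beta>. 0 \<le> \<beta> \<Longrightarrow> measure (density lborel (dens_sym \<alpha>)) {\<beta>..} = tail_sym \<alpha> \<beta>"
    and "\<And>t. measure (density lborel (dens_sym \<alpha>)) {t} = 0"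
proof -
  have meas: "dens_sym \<alpha> \<in> borel_measurable borel" unfolding dens_sym_def Let_def by measurable
  have nonneg: "dens_sym \<alpha> t \<ge> 0" for t using a unfolding dens_sym_def Let_def by auto
  have zero: "dens_sym \<alpha> t = 0" if "t < 0 \<or> t > 1" for t using a that unfolding dens_sym_def Let_def by auto
  have int: "(dens_sym \<alpha> has_integral tail_sym \<alpha> \<beta>0) {\<beta>0..1}" if "0 \<le> \<beta>0" "\<beta>0 \<le> 1" for \<beta>0
  proof -
    have "(dens_sym \<alpha> has_integral Lf id \<alpha> \<beta>0) {\<beta>0..1}"
    proof (rule L_integral[where \<Phi>' = "\<lambda>_. 1" and S = "{\<alpha>, 1 - \<alpha>}"])
      show "(id has_real_derivative 1) (at t)" for t by (simp add: id_def)
      show "dens_sym \<alpha> t = gfun id (\<lambda>_. 1) \<alpha> t" if "t \<in> {\<beta>0<..<1} - {\<alpha>, 1 - \<alpha>}" for t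
        using that \<open>0 \<le> \<beta>0\<close> by (intro dens_sym_eq a) auto
    qed (use a that in auto)
    thus ?thesis using sym_eq[OF a that] by simp
  qed
  have T0: "tail_sym \<alpha> 0 = 1" using a unfolding tail_sym_def Let_def by simp
  note df = density_facts[OF meas nonneg zero int T0]
  show "real_distribution (density lborel (dens_sym \<alpha>))" by (rule df(1))
  show "measure (density lborel (dens_sym \<alpha>)) {\<beta>..} = tail_sym \<alpha> \<beta>" if "0 \<le> \<beta>" for \<beta>
  proof (cases "\<beta> \<le> 1")
    case True thus ?thesis using df(2) that by simp
  next
    case False thus ?thesis using df(3)[of \<beta>] a unfolding tail_sym_def Let_def by auto
  qed
  show "measure (density lborel (dens_sym \<alpha>)) {t} = 0" for t by (rule df(4))
qed

lemma weak_density: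
  assumes a: "0 < \<alpha>" "\<alpha> < 1" and c: "c > 0"
  shows "real_distribution (density lborel (gfun (Phiw c) (Phiw' c) \<alpha>))"
    and "\<And>\<beta>. 0 \<le> \<beta> \<Longrightarrow> measure (density lborel (gfun (Phiw c) (Phiw' c) \<alpha>)) {\<beta>..} = tail_weak c \<alpha> \<beta>"
    and "\<And>t. measure (density lborel (gfun (Phiw c) (Phiw' c) \<alpha>)) {t} = 0"
    and "absolutely_continuous lborel (density lborel (gfun (Phiw c) (Phiw' c) \<alpha>))"
proof -
  have mono: "Phiw c s < Phiw c t" if "s < t" for s t unfolding Phiw_def using that c by simp
  have P0: "Phiw c 0 = 0" by (simp add: Phiw_def)
  have meas: "gfun (Phiw c) (Phiw' c) \<alpha> \<in> borel_measurable borel"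
    unfolding gfun_def Phiw_def Phiw'_def by measurable
  have nonneg: "gfun (Phiw c) (Phiw' c) \<alpha> t \<ge> 0" for t
  proof -
    have "Phiw c \<alpha> \<ge> 0" using mono[of 0 \<alpha>] a P0 by simp
    moreover have "Phiw c 1 - Phiw c \<alpha> \<ge> 0" using mono[of \<alpha> 1] a by simp
    moreover have "Phiw' c s \<ge> 0" for s using c unfolding Phiw'_def by simp
    ultimately show ?thesis unfolding gfun_def by (auto intro!: add_nonneg_nonneg divide_nonneg_nonneg mult_nonneg_nonneg)
  qed
  have zero: "gfun (Phiw c) (Phiw' c) \<alpha> t = 0" if "t < 0 \<or> t > 1" for t using that unfolding gfun_def by auto
  have int: "(gfun (Phiw c) (Phiw' c) \<alpha> has_integral tail_weak c \<alpha> \<beta>0) {\<beta>0..1}" if "0 \<le> \<beta>0" "\<beta>0 \<le> 1" for \<beta>0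
  proof -
    have "(gfun (Phiw c) (Phiw' c) \<alpha> has_integral Lf (Phiw c) \<alpha> \<beta>0) {\<beta>0..1}"
    proof (rule L_integral[where S = "{}"])
      show "(Phiw c has_real_derivative Phiw' c t) (at t)" for t
        unfolding Phiw_def[abs_def] Phiw'_def by (auto intro!: derivative_eq_intros)
    qed (use a that mono P0 in auto)
    thus ?thesis using weak_eq[OF a c that] by simp
  qed
  have T0: "tail_weak c \<alpha> 0 = 1" using a unfolding tail_weak_def Let_def by simp
  note df = density_facts[OF meas nonneg zero int T0]
  show "real_distribution (density lborel (gfun (Phiw c) (Phiw' c) \<alpha>))" by (rule df(1))
  show "measure (density lborel (gfun (Phiw c) (Phiw' c) \<alpha>)) {\<beta>..} = tail_weak c \<alpha> \<beta>" if "0 \<le> \<beta>" for \<beta>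
  proof (cases "\<beta> \<le> 1")
    case True thus ?thesis using df(2) that by simp
  next
    case False thus ?thesis using df(3)[of \<beta>] a unfolding tail_weak_def Let_def by auto
  qed
  show "measure (density lborel (gfun (Phiw c) (Phiw' c) \<alpha>)) {t} = 0" for t by (rule df(4))
  show "absolutely_continuous lborel (density lborel (gfun (Phiw c) (Phiw' c) \<alpha>))" by (rule df(5))
qed

lemma interval_one:
  assumes "real_distribution G" "\<And>\<beta>. 0 \<le> \<beta> \<Longrightarrow> measure G {\<beta>..} = T \<beta>" "\<And>t. measure G {t} = 0"
    "0 \<le> a" "a \<le> 1" "T a = 1" "T 1 = 0"
  shows "measure G {a..1} = 1"
proof -
  interpret G: real_distribution G by (rule assms(1))
  have "measure G ({a..1} \<union> {1<..}) = measure G {a..1} + measure G {1<..}"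
    by (intro G.finite_measure_Union) auto
  moreover have "{a..1} \<union> {1<..} = {a..}" using assms by auto
  moreover have "measure G ({1} \<union> {1<..}) = measure G {1} + measure G {1<..}"
    by (intro G.finite_measure_Union) auto
  moreover have "{1} \<union> {1<..} = {1::real..}" by auto
  ultimately show ?thesis using assms(2)[of a] assms(2)[of 1] assms(3)[of 1] assms by simp
qed

theorem proposition2p1:
  fixes \<alpha> c :: real
  assumes "0 < \<alpha>" and "\<alpha> < 1" and "0 < c"
  shows
    "(real_distribution (density lborel (dens_sym \<alpha>))
      \<and> measure (density lborel (dens_sym \<alpha>)) {min \<alpha> (1 - \<alpha>)..1} = 1
      \<and> weak_conv_m (\<lambda>N. range_law (1/2) N (start_pt \<alpha> N)) (density lborel (dens_sym \<alpha>))
      \<and> (\<forall>\<beta>\<ge>0. (\<lambda>N. range_tail (1/2) N (start_pt \<alpha> N) \<beta>) \<longlonglongrightarrow> tail_sym \<alpha> \<beta>)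
      \<and> (\<forall>\<beta>\<ge>0. measure (density lborel (dens_sym \<alpha>)) {\<beta>..} = tail_sym \<alpha> \<beta>))
   \<and> (\<exists>G. real_distribution G \<and> absolutely_continuous lborel G
      \<and> measure G {min \<alpha> (1 - \<alpha>)..1} = 1
      \<and> weak_conv_m (\<lambda>N. range_law (1/2 + c / real N) N (start_pt \<alpha> N)) G
      \<and> (\<forall>\<beta>\<ge>0. (\<lambda>N. range_tail (1/2 + c / real N) N (start_pt \<alpha> N) \<beta>)
                  \<longlonglongrightarrow> tail_weak c \<alpha> \<beta>)
      \<and> (\<forall>\<beta>\<ge>0. measure G {\<beta>..} = tail_weak c \<alpha> \<beta>))"
proof -
  have x: "eventually (\<lambda>N. 0 < start_pt \<alpha> N \<and> start_pt \<alpha> N < N) sequentially"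
    using start_pt_props[OF assms(1,2)] by simp
  have ts1: "tail_sym \<alpha> \<beta> = 0" if "1 \<le> \<beta>" for \<beta>
    using that assms unfolding tail_sym_def Let_def by auto
  have tw1: "tail_weak c \<alpha> \<beta> = 0" if "1 \<le> \<beta>" for \<beta>
    using that assms unfolding tail_weak_def Let_def by (auto simp: min_def max_def)
  have tsa: "tail_sym \<alpha> (min \<alpha> (1 - \<alpha>)) = 1" unfolding tail_sym_def Let_def by simp
  have twa: "tail_weak c \<alpha> (min \<alpha> (1 - \<alpha>)) = 1" unfolding tail_weak_def Let_def by simp
  have ts0: "tail_sym \<alpha> 0 = 1" using assms unfolding tail_sym_def Let_def by simp
  have tw0: "tail_weak c \<alpha> 0 = 1" using assms unfolding tail_weak_def Let_def by simp
  note sd = sym_density[OF assms(1,2)]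
  note wd = weak_density[OF assms]
  have symG: "prob_space (density lborel (dens_sym \<alpha>))" "sets (density lborel (dens_sym \<alpha>)) = sets borel"
    using sd(1) unfolding real_distribution_def real_distribution_axioms_def by auto
  have weakG: "prob_space (density lborel (gfun (Phiw c) (Phiw' c) \<alpha>))" "sets (density lborel (gfun (Phiw c) (Phiw' c) \<alpha>)) = sets borel"
    using wd(1) unfolding real_distribution_def real_distribution_axioms_def by auto
  note fs = final_generic[where p = "\<lambda>_. 1/2" and x = "start_pt \<alpha>" and T = "tail_sym \<alpha>"
      and G = "density lborel (dens_sym \<alpha>)"]
  have limS: "(\<lambda>N. measure (path_space ((\<lambda>_. 1/2) N)) {\<omega> \<in> space (path_space ((\<lambda>_. 1/2) N)). m N \<le> int (range_walk N (start_pt \<alpha> N) \<omega>)}) \<longlonglongrightarrow> tail_sym \<alpha> \<beta>"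
    if "(\<lambda>N. real_of_int (m N) / real N) \<longlonglongrightarrow> \<beta>" "eventually (\<lambda>N. m N \<le> int N) sequentially" "0 \<le> \<beta>" "\<beta> \<le> 1" for m \<beta>
  proof -
    have "FF \<alpha> (max \<alpha> \<beta>) (min \<alpha> (1-\<beta>)) 1 = Lf id \<alpha> \<beta>" unfolding Lf_def by simp
    thus ?thesis using sym_tail[OF assms(1,2) that] sym_eq[OF assms(1,2) that(3,4)] by simp
  qed
  have pS: "eventually (\<lambda>N. 1/2 \<le> (\<lambda>_. 1/2::real) N \<and> (\<lambda>_. 1/2::real) N < 1) sequentially" by simp
  note fs1 = fs[OF pS x limS ts1 ts0 symG sd(2) sd(3)]
  have fs': "(\<forall>\<beta>\<ge>0. (\<lambda>N. range_tail (1/2) N (start_pt \<alpha> N) \<beta>) \<longlonglongrightarrow> tail_sym \<alpha> \<beta>) \<and>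
     weak_conv_m (\<lambda>N. range_law (1/2) N (start_pt \<alpha> N)) (density lborel (dens_sym \<alpha>))"
    using fs1 by simp
  note fw = final_generic[where p = "\<lambda>N. 1/2 + c / real N" and x = "start_pt \<alpha>" and T = "tail_weak c \<alpha>"
      and G = "density lborel (gfun (Phiw c) (Phiw' c) \<alpha>)"]
  have pW: "eventually (\<lambda>N. 1/2 \<le> (\<lambda>N. 1/2 + c / real N) N \<and> (\<lambda>N. 1/2 + c / real N) N < 1) sequentially"
    using eventually_ge_at_top[of "nat \<lceil>2*c\<rceil> + 1"]
  proof eventually_elim
    case (elim N)
    have N0: "real N > 2 * c" using elim by linarith
    hence "c / real N < 1/2" using assms(3) by (simp add: divide_less_eq)
    moreover have "c / real N \<ge> 0" using assms(3) by simp
    ultimately have "1/2 \<le> 1/2 + c / real N \<and> 1/2 + c / real N < 1" by linarith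
    thus ?case by simp
  qed
  have limW: "(\<lambda>N. measure (path_space ((\<lambda>N. 1/2 + c / real N) N)) {\<omega> \<in> space (path_space ((\<lambda>N. 1/2 + c / real N) N)). m N \<le> int (range_walk N (start_pt \<alpha> N) \<omega>)}) \<longlonglongrightarrow> tail_weak c \<alpha> \<beta>"
    if "(\<lambda>N. real_of_int (m N) / real N) \<longlonglongrightarrow> \<beta>" "eventually (\<lambda>N. m N \<le> int N) sequentially" "0 \<le> \<beta>" "\<beta> \<le> 1" for m \<beta>
    using weak_tail[OF assms that] weak_eq[OF assms that(3,4)] unfolding Lf_def by simp
  note fw1 = fw[OF pW x limW tw1 tw0 weakG wd(2) wd(3)]
  have fw': "(\<forall>\<beta>\<ge>0. (\<lambda>N. range_tail (1/2 + c / real N) N (start_pt \<alpha> N) \<beta>) \<longlonglongrightarrow> tail_weak c \<alpha> \<beta>) \<and>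
     weak_conv_m (\<lambda>N. range_law (1/2 + c / real N) N (start_pt \<alpha> N)) (density lborel (gfun (Phiw c) (Phiw' c) \<alpha>))"
    using fw1 by simp
  show ?thesis
  proof (intro conjI)
    show "real_distribution (density lborel (dens_sym \<alpha>))" by (rule sd(1))
    show "measure (density lborel (dens_sym \<alpha>)) {min \<alpha> (1 - \<alpha>)..1} = 1"
      by (rule interval_one[OF sd(1) sd(2) sd(3)]) (use assms tsa ts1 in auto)
    show "weak_conv_m (\<lambda>N. range_law (1 / 2) N (start_pt \<alpha> N)) (density lborel (dens_sym \<alpha>))" using fs' by simp
    show "\<forall>\<beta>\<ge>0. (\<lambda>N. range_tail (1 / 2) N (start_pt \<alpha> N) \<beta>) \<longlonglongrightarrow> tail_sym \<alpha> \<beta>" using fs' by simp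
    show "\<forall>\<beta>\<ge>0. measure (density lborel (dens_sym \<alpha>)) {\<beta>..} = tail_sym \<alpha> \<beta>" using sd(2) by simp
    show "\<exists>G. real_distribution G \<and> absolutely_continuous lborel G \<and>
      measure G {min \<alpha> (1 - \<alpha>)..1} = 1 \<and>
      weak_conv_m (\<lambda>N. range_law (1 / 2 + c / real N) N (start_pt \<alpha> N)) G \<and>
      (\<forall>\<beta>\<ge>0. (\<lambda>N. range_tail (1 / 2 + c / real N) N (start_pt \<alpha> N) \<beta>) \<longlonglongrightarrow> tail_weak c \<alpha> \<beta>) \<and>
      (\<forall>\<beta>\<ge>0. measure G {\<beta>..} = tail_weak c \<alpha> \<beta>)"
    proof (intro exI conjI)
      show "real_distribution (density lborel (gfun (Phiw c) (Phiw' c) \<alpha>))" by (rule wd(1))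
      show "absolutely_continuous lborel (density lborel (gfun (Phiw c) (Phiw' c) \<alpha>))" by (rule wd(4))
      show "measure (density lborel (gfun (Phiw c) (Phiw' c) \<alpha>)) {min \<alpha> (1 - \<alpha>)..1} = 1"
        by (rule interval_one[OF wd(1) wd(2) wd(3)]) (use assms twa tw1 in auto)
      show "weak_conv_m (\<lambda>N. range_law (1 / 2 + c / real N) N (start_pt \<alpha> N)) (density lborel (gfun (Phiw c) (Phiw' c) \<alpha>))"
        using fw' by simp
      show "\<forall>\<beta>\<ge>0. (\<lambda>N. range_tail (1 / 2 + c / real N) N (start_pt \<alpha> N) \<beta>) \<longlonglongrightarrow> tail_weak c \<alpha> \<beta>" using fw' by simp
      show "\<forall>\<beta>\<ge>0. measure (density lborel (gfun (Phiw c) (Phiw' c) \<alpha>)) {\<beta>..} = tail_weak c \<alpha> \<beta>" using wd(2) by simp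
    qed
  qed
qed

end
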